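(* Let $\beta>0$ and $\eta>0$ be fixed and let $T>0$. Assume that $u\in C([0,T];\mathcal{F}_{3,3}(\mathbb{R}))$ is a solution of $$u_t+uu_x+\beta\mathcal{H}u_{xx}+\eta(\mathcal{H}u_x-u_{xx})=0,\quad x\in\mathbb{R},\ t\in[0,T].$$ Then $u(t)=0$ for all $t\in[0,T]$.
   Context: $\mathcal{H}$ is the Hilbert transform, $\mathcal{H}f=(i\,\mathrm{sgn}(\xi)\widehat f(\xi))^\vee$, with $\widehat f(\xi)=(2\pi)^{-1/2}\int f(x)e^{-ix\xi}dx$. For $r\in\mathbb{R}$, $L^2_r(\mathbb{R})$ is the space of measurable $f$ with $\|f\|_{L^2_r}^2=\int(1+x^2)^r|f(x)|^2dx<\infty$, and $\mathcal{F}_{s,r}=H^s(\mathbb{R})\cap L^2_r(\mathbb{R})$ with norm $\|f\|^2_{\mathcal{F}_{s,r}}=\|f\|_{H^s}^2+\|f\|_{L^2_r}^2$. The solution satisfies the integral equation $u(t)=S(t)u(0)-\int_0^tS(t-\tau)[uu_x](\tau)d\tau$ with $S(t)f=(e^{i\beta\xi|\xi|t-\eta(\xi^2-|\xi|)t}\widehat f)^\vee$. *)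

theory Defs
  imports "HOL-Analysis.Analysis"
begin

text \<open>It is given by the Lebesgue integral; it is only applied to functions in L^1
  (every element of L^2_r with r > 1/2 is in L^1, and products of two L^2 functions are in L^1).\<close>
definition FT :: "(real \<Rightarrow> real) \<Rightarrow> real \<Rightarrow> complex" where
  "FT f \<xi> = complex_of_real (1 / sqrt (2 * pi)) *
     (\<integral>x. complex_of_real (f x) * cis (- (x * \<xi>)) \<partial>lborel)"

definition L2w :: "real \<Rightarrow> (real \<Rightarrow> real) \<Rightarrow> bool" where
  "L2w r f \<longleftrightarrow> f \<in> borel_measurable lborel \<and>
     integrable lborel (\<lambda>x. (1 + x\<^sup>2) powr r * (f x)\<^sup>2)"

definition L2w_sq :: "real \<Rightarrow> (real \<Rightarrow> real) \<Rightarrow> real" where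
  "L2w_sq r f = (\<integral>x. (1 + x\<^sup>2) powr r * (f x)\<^sup>2 \<partial>lborel)"

definition Hs_sq :: "real \<Rightarrow> (real \<Rightarrow> real) \<Rightarrow> real" where
  "Hs_sq s f = (\<integral>\<xi>. (1 + \<xi>\<^sup>2) powr s * (cmod (FT f \<xi>))\<^sup>2 \<partial>lborel)"

text \<open>Membership in F_{s,r} = H^s \<inter> L^2_r (used for r > 1/2, where f \<in> L^1).\<close>
definition inF :: "real \<Rightarrow> real \<Rightarrow> (real \<Rightarrow> real) \<Rightarrow> bool" where
  "inF s r f \<longleftrightarrow> L2w r f \<and> L2w 0 f \<and>
     integrable lborel (\<lambda>\<xi>. (1 + \<xi>\<^sup>2) powr s * (cmod (FT f \<xi>))\<^sup>2)"

definition Fnorm :: "real \<Rightarrow> real \<Rightarrow> (real \<Rightarrow> real) \<Rightarrow> real" where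
  "Fnorm s r f = sqrt (Hs_sq s f + L2w_sq r f)"

text \<open>Fourier multiplier of the linear part: S(t) has symbol exp(t * sym beta eta xi).\<close>
definition sym :: "real \<Rightarrow> real \<Rightarrow> real \<Rightarrow> complex" where
  "sym \<beta> \<eta> \<xi> = \<i> * complex_of_real (\<beta> * \<xi> * \<bar>\<xi>\<bar>) - complex_of_real (\<eta> * (\<xi>\<^sup>2 - \<bar>\<xi>\<bar>))"

text \<open>u : [0,T] \<rightarrow> F_{3,3} is a (mild) solution: u \<in> C([0,T]; F_{3,3}) and the integral equation
  u(t) = S(t)u(0) - int_0^t S(t-tau)[u u_x](tau) dtau holds, written on the Fourier side
  (a.e. in xi), using (u u_x)^ = (i xi / 2) (u^2)^.\<close>
definition mild_solution :: "real \<Rightarrow> real \<Rightarrow> real \<Rightarrow> (real \<Rightarrow> real \<Rightarrow> real) \<Rightarrow> bool" where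
  "mild_solution \<beta> \<eta> T u \<longleftrightarrow>
     (\<forall>t\<in>{0..T}. inF 3 3 (u t)) \<and>
     (\<forall>t\<in>{0..T}. ((\<lambda>\<tau>. Fnorm 3 3 (\<lambda>x. u \<tau> x - u t x)) \<longlongrightarrow> 0) (at t within {0..T})) \<and>
     (\<forall>t\<in>{0..T}. AE \<xi> in lborel.
        set_integrable lborel {0..t}
          (\<lambda>\<tau>. exp (sym \<beta> \<eta> \<xi> * complex_of_real (t - \<tau>)) * (\<i> * complex_of_real \<xi> / 2)
                 * FT (\<lambda>x. (u \<tau> x)\<^sup>2) \<xi>) \<and>
        FT (u t) \<xi> = exp (sym \<beta> \<eta> \<xi> * complex_of_real t) * FT (u 0) \<xi>
          - set_lebesgue_integral lborel {0..t}
              (\<lambda>\<tau>. exp (sym \<beta> \<eta> \<xi> * complex_of_real (t - \<tau>)) * (\<i> * complex_of_real \<xi> / 2)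
                 * FT (\<lambda>x. (u \<tau> x)\<^sup>2) \<xi>))"

end

theory Submission
  imports Defs "HOL-Analysis.Analysis"
begin


lemma integrable_inv_1px2: "integrable lborel (\<lambda>x::real. 1 / (1 + x\<^sup>2))"
proof -
  have "set_integrable lborel (einterval (-\<infinity>) \<infinity>) (\<lambda>x::real. 1 / (1 + x\<^sup>2))"
  proof (rule interval_integral_FTC_nonneg(1)[where F = arctan and A = "-(pi/2)" and B = "pi/2"])
    show "\<And>x. - \<infinity> < ereal x \<Longrightarrow> ereal x < \<infinity> \<Longrightarrow> DERIV arctan x :> 1 / (1 + x\<^sup>2)"
      by (auto intro!: derivative_eq_intros simp: power2_eq_square divide_inverse)
    show "\<And>x. - \<infinity> < ereal x \<Longrightarrow> ereal x < \<infinity> \<Longrightarrow> isCont (\<lambda>x. 1 / (1 + x\<^sup>2)) x"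
      by (intro continuous_intros) (smt (verit) zero_le_power2)
    show "((arctan \<circ> real_of_ereal) \<longlongrightarrow> - (pi / 2)) (at_right (- \<infinity>))"
      by (simp add: ereal_tendsto_simps1 tendsto_arctan_at_bot)
    show "((arctan \<circ> real_of_ereal) \<longlongrightarrow> (pi / 2)) (at_left \<infinity>)"
      by (simp add: ereal_tendsto_simps1 tendsto_arctan_at_top)
  qed auto
  then show ?thesis by (simp add: einterval_def set_integrable_def)
qed


lemma amgm_w:
  fixes a b w :: real assumes "w > 0"
  shows "\<bar>a * b\<bar> \<le> w * a\<^sup>2 + b\<^sup>2 / w"
proof -
  have "0 \<le> (w * \<bar>a\<bar> - \<bar>b\<bar>)\<^sup>2 / w" using assms by simp
  also have "(w * \<bar>a\<bar> - \<bar>b\<bar>)\<^sup>2 / w = w * a\<^sup>2 + b\<^sup>2 / w - 2 * \<bar>a * b\<bar>"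
    using assms by (simp add: power2_eq_square field_simps abs_mult)
  finally show ?thesis by (smt (verit) abs_ge_zero)
qed


lemma sin_minus_id_bound2: "\<bar>sin (x::real) - x\<bar> \<le> x\<^sup>2 / 2"
proof -
  have s: "(\<Sum>m<2. sin_coeff m * x ^ m) = x" by (simp add: numeral_2_eq_2 sin_coeff_Suc)
  have "\<bar>sin x - x\<bar> \<le> inverse (fact 2) * \<bar>x\<bar> ^ 2" using Maclaurin_sin_bound[of x 2] unfolding s .
  also have "inverse (fact 2) * \<bar>x\<bar> ^ 2 = x\<^sup>2 / 2"
    by (simp add: numeral_2_eq_2 power2_abs)
  finally show ?thesis .
qed
lemma sin_minus_id_bound3: "\<bar>sin (x::real) - x\<bar> \<le> \<bar>x\<bar> ^ 3 / 6"
proof -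
  have s: "(\<Sum>m<3. sin_coeff m * x ^ m) = x" by (simp add: numeral_3_eq_3 sin_coeff_Suc cos_coeff_Suc)
  have "\<bar>sin x - x\<bar> \<le> inverse (fact 3) * \<bar>x\<bar> ^ 3" using Maclaurin_sin_bound[of x 3] unfolding s .
  also have "inverse (fact 3) * \<bar>x\<bar> ^ 3 = \<bar>x\<bar> ^ 3 / 6"
    by (simp add: numeral_3_eq_3)
  finally show ?thesis .
qed
lemma one_minus_cos_bound: "0 \<le> 1 - cos (x::real) \<and> 1 - cos x \<le> x\<^sup>2 / 2"
proof -
  have "1 - cos x = 2 * (sin (x/2))\<^sup>2"
    using cos_double_sin[of "x/2"] by simp
  moreover have "(sin (x/2))\<^sup>2 \<le> (x/2)\<^sup>2"
    using abs_sin_x_le_abs_x[of "x/2"] by (metis abs_ge_zero power2_abs power_mono)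
  ultimately show ?thesis by (simp add: power2_eq_square)
qed

lemma cis_minus_one_bound: "cmod (cis a - 1) \<le> \<bar>a\<bar>"
proof -
  have "(cmod (cis a - 1))\<^sup>2 = (cos a - 1)\<^sup>2 + (sin a)\<^sup>2"
    by (simp add: cmod_def cis.code)
  also have "\<dots> = 2 * (1 - cos a)"
    using sin_cos_squared_add[of a] by (simp add: power2_eq_square algebra_simps)
  also have "\<dots> \<le> a\<^sup>2" using one_minus_cos_bound[of a] by simp
  finally have "(cmod (cis a - 1))\<^sup>2 \<le> \<bar>a\<bar>\<^sup>2" by simp
  then show ?thesis by (meson abs_ge_zero norm_ge_zero power2_le_imp_le)
qed

lemma cis_even_bound: "cmod (cis (- a) + cis a - 2) \<le> a\<^sup>2"
proof -
  have "cis (- a) + cis a - 2 = complex_of_real (2 * cos a - 2)"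
    by (simp add: cis.code complex_eq_iff)
  then have "cmod (cis (- a) + cis a - 2) = \<bar>2 * cos a - 2\<bar>" by (simp only: norm_of_real)
  then show ?thesis using one_minus_cos_bound[of a] by simp
qed

lemma cis_odd: "cis (- a) - cis a = - 2 * \<i> * complex_of_real (sin a)"
  by (simp add: cis.code complex_eq_iff)


lemma exp_quad_bound:
  fixes z :: complex
  assumes "norm z \<le> 1 / 2"
  shows "norm (exp z - 1 - z) \<le> (norm z)\<^sup>2"
proof (cases "z = 0")
  case True then show ?thesis by simp
next
  case False
  have sums: "(\<lambda>k. z ^ (k + 2) /\<^sub>R fact (k + 2)) sums (exp z - (\<Sum>k<2. z ^ k /\<^sub>R fact k))"
    by (intro sums_split_initial_segment exp_converges)
  have "summable (\<lambda>k. norm z ^ (k + 2) /\<^sub>R fact (k + 2))"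
    using summable_norm_exp[of z]
    by (intro summable_norm summable_ignore_initial_segment)
       (auto simp: norm_power norm_divide divide_simps)
  also have "?this \<longleftrightarrow> summable (\<lambda>k. norm z ^ 2 * (norm z ^ k / fact (k +2)))"
    by (simp add: power_add mult_ac divide_simps power2_eq_square del: of_nat_Suc of_nat_add)
  also have "\<dots> \<longleftrightarrow> summable (\<lambda>k. norm z ^ k / fact (k + 2))"
    by (subst summable_cmult_iff) (use \<open>z \<noteq> 0\<close> in auto)
  finally have summable: "summable (\<lambda>k. norm z ^ k / fact (k + 2))" .
  have "exp z - 1 - z = (\<Sum>k. z ^ (k + 2) / fact (k + 2))"
    using sums by (simp add: sums_iff scaleR_conv_of_real divide_simps eval_nat_numeral)
  also have "norm \<dots> \<le> (\<Sum>k. norm (z ^ (k + 2) / fact (k + 2)))"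
    using summable_norm_exp[of z]
    by (intro summable_norm summable_ignore_initial_segment)
       (auto simp: norm_power norm_divide divide_simps)
  also have "\<dots> = (\<Sum>k. norm z ^ 2 * (norm z ^ k / fact (k + 2)))"
    by (simp add: power_add norm_power norm_divide mult_ac norm_mult power2_eq_square del: of_nat_Suc)
  also have "\<dots> = norm z ^ 2 * (\<Sum>k. norm z ^ k / fact (k + 2))"
    using summable by (rule suminf_mult)
  also have "\<dots> \<le> norm z ^ 2 * (1 / (1 - norm z) / 2)"
  proof (intro mult_left_mono, rule sums_le)
    show "(\<lambda>k. norm z ^ k / fact (k + 2)) sums (\<Sum>k. norm z ^ k / fact (k + 2))"
      using summable by blast
    show "(\<lambda>k. norm z ^ k / 2) sums (1 / (1 - norm z) / 2)"
      using assms by (intro geometric_sums sums_divide) auto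
  next
    fix k :: nat
    have "norm z ^ k / fact (k + 2) \<le> norm z ^ k / fact 2"
      by (intro divide_left_mono fact_mono) auto
    thus "norm z ^ k / fact (k + 2) \<le> norm z ^ k / 2"
      by simp
  qed (auto simp: divide_simps)
  also have "\<dots> \<le> norm z ^ 2 * 1"
    using assms by (intro mult_left_mono) (auto simp: divide_simps)
  finally show ?thesis by simp
qed


lemma limit_lemma:
  fixes \<alpha> \<beta> :: "'a::real_normed_vector"
  assumes e: "e \<longlonglongrightarrow> 0" and epos: "\<And>n. e n > 0"
    and d: "d \<longlonglongrightarrow> 0"
    and bnd: "\<And>n. norm (\<alpha> + e n *\<^sub>R \<beta> + e n *\<^sub>R d n) \<le> K * (e n)\<^sup>2"
  shows "\<alpha> = 0 \<and> \<beta> = 0"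
proof -
  have l1: "(\<lambda>n. \<alpha> + e n *\<^sub>R \<beta> + e n *\<^sub>R d n) \<longlonglongrightarrow> \<alpha> + 0 *\<^sub>R \<beta> + 0 *\<^sub>R 0"
    by (intro tendsto_add tendsto_scaleR tendsto_const e d)
  have e2: "(\<lambda>n. (e n)\<^sup>2) \<longlonglongrightarrow> 0" using tendsto_power[OF e, of 2] by simp
  have "(\<lambda>n. K * (e n)\<^sup>2) \<longlonglongrightarrow> 0" using tendsto_mult_right_zero[OF e2] .
  then have l2: "(\<lambda>n. \<alpha> + e n *\<^sub>R \<beta> + e n *\<^sub>R d n) \<longlonglongrightarrow> 0"
    by (rule Lim_null_comparison[rotated]) (intro always_eventually allI bnd)
  from l1 l2 have a0: "\<alpha> = 0" using LIMSEQ_unique by fastforce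
  have b2: "norm (\<beta> + d n) \<le> K * e n" for n
  proof -
    have "norm (e n *\<^sub>R (\<beta> + d n)) \<le> K * (e n)\<^sup>2" using bnd[of n] a0 by (simp add: scaleR_add_right)
    then have "e n * norm (\<beta> + d n) \<le> e n * (K * e n)" using epos[of n] by (simp add: power2_eq_square mult_ac)
    then show ?thesis using epos[of n] by simp
  qed
  have "(\<lambda>n. K * e n) \<longlonglongrightarrow> 0" using tendsto_mult_right_zero[OF e] .
  then have "(\<lambda>n. \<beta> + d n) \<longlonglongrightarrow> 0"
    by (rule Lim_null_comparison[rotated]) (intro always_eventually allI b2)
  moreover have "(\<lambda>n. \<beta> + d n) \<longlonglongrightarrow> \<beta> + 0" by (intro tendsto_add tendsto_const d)
  ultimately have "\<beta> = 0" using LIMSEQ_unique by fastforce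
  with a0 show ?thesis by simp
qed





lemma cis_lin_meas[measurable]: "(\<lambda>x::real. cis (- (x * \<xi>))) \<in> borel_measurable borel"
  by (intro borel_measurable_continuous_onI continuous_intros)

lemma pw_dom:
  fixes a b x :: real
  assumes "b\<^sup>2 \<le> (1 + x\<^sup>2)\<^sup>2"
  shows "\<bar>b * a\<bar> \<le> (1 + x\<^sup>2) ^ 3 * a\<^sup>2 + 1 / (1 + x\<^sup>2)"
proof -
  have w: "(1 + x\<^sup>2) ^ 3 > 0" by (simp add: add_pos_nonneg)
  have "\<bar>a * b\<bar> \<le> (1 + x\<^sup>2) ^ 3 * a\<^sup>2 + b\<^sup>2 / (1 + x\<^sup>2) ^ 3" by (rule amgm_w[OF w])
  moreover have "b\<^sup>2 / (1 + x\<^sup>2) ^ 3 \<le> (1 + x\<^sup>2)\<^sup>2 / (1 + x\<^sup>2) ^ 3"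
    using w assms by (intro divide_right_mono) auto
  moreover have "(1 + x\<^sup>2)\<^sup>2 / (1 + x\<^sup>2) ^ 3 = 1 / (1 + x\<^sup>2)"
    using w by (simp add: power2_eq_square power3_eq_cube)
  ultimately show ?thesis by (simp add: mult.commute)
qed

lemma L2w3_facts:
  fixes f :: "real \<Rightarrow> real"
  assumes "L2w 3 f"
  shows L2w3_meas: "f \<in> borel_measurable lborel"
  and L2w3_w: "integrable lborel (\<lambda>x. (1 + x\<^sup>2) ^ 3 * (f x)\<^sup>2)"
  and L2w3_i0: "integrable lborel f"
  and L2w3_i1: "integrable lborel (\<lambda>x. x * f x)"
  and L2w3_i2: "integrable lborel (\<lambda>x. x\<^sup>2 * f x)"
  and L2w3_s0: "integrable lborel (\<lambda>x. (f x)\<^sup>2)"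
  and L2w3_s1: "integrable lborel (\<lambda>x. \<bar>x\<bar> * (f x)\<^sup>2)"
  and L2w3_s2: "integrable lborel (\<lambda>x. x\<^sup>2 * (f x)\<^sup>2)"
  and L2w3_b0: "(\<integral>x. (f x)\<^sup>2 \<partial>lborel) \<le> L2w_sq 3 f"
  and L2w3_b1: "(\<integral>x. \<bar>x\<bar> * (f x)\<^sup>2 \<partial>lborel) \<le> L2w_sq 3 f"
  and L2w3_b2: "(\<integral>x. x\<^sup>2 * (f x)\<^sup>2 \<partial>lborel) \<le> L2w_sq 3 f"
proof -
  have pos: "0 \<le> 1 + x\<^sup>2" for x :: real by (simp add: add_nonneg_nonneg)
  show m[measurable]: "f \<in> borel_measurable lborel" using assms by (simp add: L2w_def)
  show w: "integrable lborel (\<lambda>x. (1 + x\<^sup>2) ^ 3 * (f x)\<^sup>2)"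
    using assms pos by (simp add: L2w_def)
  have eq: "L2w_sq 3 f = (\<integral>x. (1 + x\<^sup>2) ^ 3 * (f x)\<^sup>2 \<partial>lborel)"
    unfolding L2w_sq_def using pos by simp
  have D: "integrable lborel (\<lambda>x. (1 + x\<^sup>2) ^ 3 * (f x)\<^sup>2 + 1 / (1 + x\<^sup>2))"
    by (intro Bochner_Integration.integrable_add w integrable_inv_1px2)
  have dn: "norm ((1 + x\<^sup>2) ^ 3 * (f x)\<^sup>2 + 1 / (1 + x\<^sup>2)) = (1 + x\<^sup>2) ^ 3 * (f x)\<^sup>2 + 1 / (1 + x\<^sup>2)" for x :: real
    using pos[of x] by (simp add: add_nonneg_nonneg)
  have x1: "(1::real)\<^sup>2 \<le> (1 + x\<^sup>2)\<^sup>2" for x :: real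
    using pos[of x] by (intro power_mono) auto
  have x2: "x\<^sup>2 \<le> (1 + x\<^sup>2)\<^sup>2" for x :: real
  proof -
    have "x\<^sup>2 \<le> 1 + x\<^sup>2" by simp
    also have "\<dots> \<le> (1 + x\<^sup>2)\<^sup>2"
      using mult_right_mono[of 1 "1+x\<^sup>2" "1+x\<^sup>2"] by (simp add: power2_eq_square)
    finally show ?thesis .
  qed
  have x3: "(x\<^sup>2)\<^sup>2 \<le> (1 + x\<^sup>2)\<^sup>2" for x :: real
    by (intro power_mono) auto
  show "integrable lborel f"
    by (rule Bochner_Integration.integrable_bound[OF D]) (use pw_dom[OF x1] dn in auto)
  show "integrable lborel (\<lambda>x. x * f x)"
    by (rule Bochner_Integration.integrable_bound[OF D]) (use pw_dom[OF x2] dn in auto)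
  show "integrable lborel (\<lambda>x. x\<^sup>2 * f x)"
    by (rule Bochner_Integration.integrable_bound[OF D]) (use pw_dom[OF x3] dn in auto)
  have p1: "1 \<le> (1 + x\<^sup>2) ^ 3" for x :: real
    by (simp add: one_le_power)
  have p13: "1 + x\<^sup>2 \<le> (1 + x\<^sup>2) ^ 3" for x :: real
  proof -
    have "(1 + x\<^sup>2) ^ 1 \<le> (1 + x\<^sup>2) ^ 3" by (rule power_increasing) auto
    then show ?thesis by simp
  qed
  have p2: "\<bar>x\<bar> \<le> (1 + x\<^sup>2) ^ 3" for x :: real
  proof -
    have "\<bar>x\<bar> \<le> 1 + x\<^sup>2"
    proof (cases "\<bar>x\<bar> \<le> 1")
      case True
      then show ?thesis using zero_le_power2[of x] by linarith
    next
      case False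
      have "\<bar>x\<bar> * 1 \<le> \<bar>x\<bar> * \<bar>x\<bar>" using False by (intro mult_left_mono) auto
      then have "\<bar>x\<bar> \<le> x\<^sup>2" by (simp add: power2_eq_square)
      then show ?thesis by linarith
    qed
    then show ?thesis using p13[of x] by linarith
  qed
  have p3: "x\<^sup>2 \<le> (1 + x\<^sup>2) ^ 3" for x :: real
    using p13[of x] by linarith
  have bnd: "\<And>x. norm (g x * (f x)\<^sup>2) \<le> norm ((1 + x\<^sup>2) ^ 3 * (f x)\<^sup>2)"
    if "\<And>x. \<bar>g x\<bar> \<le> (1 + x\<^sup>2) ^ 3" for g :: "real \<Rightarrow> real"
    using that by (auto simp: abs_mult intro!: mult_right_mono)
  have s0: "integrable lborel (\<lambda>x. 1 * (f x)\<^sup>2)"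
    by (rule Bochner_Integration.integrable_bound[OF w]) (use bnd[of "\<lambda>_. 1"] p1 in auto)
  then show "integrable lborel (\<lambda>x. (f x)\<^sup>2)" by simp
  show s1: "integrable lborel (\<lambda>x. \<bar>x\<bar> * (f x)\<^sup>2)"
    by (rule Bochner_Integration.integrable_bound[OF w]) (use bnd[of "\<lambda>x. \<bar>x\<bar>"] p2 in auto)
  show s2: "integrable lborel (\<lambda>x. x\<^sup>2 * (f x)\<^sup>2)"
    by (rule Bochner_Integration.integrable_bound[OF w]) (use bnd[of "\<lambda>x. x\<^sup>2"] p3 in auto)
  show "(\<integral>x. (f x)\<^sup>2 \<partial>lborel) \<le> L2w_sq 3 f"
  proof -
    have "(f x)\<^sup>2 \<le> (1 + x\<^sup>2) ^ 3 * (f x)\<^sup>2" for x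
      using mult_right_mono[OF p1[of x], of "(f x)\<^sup>2"] by simp
    then show ?thesis unfolding eq using s0 w by (intro integral_mono) auto
  qed
  show "(\<integral>x. \<bar>x\<bar> * (f x)\<^sup>2 \<partial>lborel) \<le> L2w_sq 3 f"
    unfolding eq using s1 w p2 by (intro integral_mono) (auto intro: mult_right_mono)
  show "(\<integral>x. x\<^sup>2 * (f x)\<^sup>2 \<partial>lborel) \<le> L2w_sq 3 f"
    unfolding eq using s2 w p3 by (intro integral_mono) (auto intro: mult_right_mono)
qed



definition KF :: "(real \<Rightarrow> real) \<Rightarrow> real \<Rightarrow> complex" where
  "KF f \<xi> = (\<integral>x. complex_of_real (f x) * cis (- (x * \<xi>)) \<partial>lborel)"

lemma FT_KF: "FT f \<xi> = complex_of_real (1 / sqrt (2*pi)) * KF f \<xi>"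
  by (simp add: FT_def KF_def)

context
  fixes f :: "real \<Rightarrow> real"
  assumes fm[measurable]: "f \<in> borel_measurable lborel" and fi: "integrable lborel f"
begin

lemma KF_int: "integrable lborel (\<lambda>x. complex_of_real (f x) * cis (- (x * \<xi>)))"
  by (rule Bochner_Integration.integrable_bound[OF fi]) (auto simp: norm_mult)

lemma KF_0: "KF f 0 = complex_of_real (\<integral>x. f x \<partial>lborel)"
  by (simp add: KF_def)

lemma KF_norm: "norm (KF f \<xi>) \<le> (\<integral>x. \<bar>f x\<bar> \<partial>lborel)"
  unfolding KF_def
  by (rule Bochner_Integration.integral_norm_bound_integral[OF KF_int]) (auto simp: norm_mult intro: integrable_abs fi)

lemma KF_diff:
  assumes i1: "integrable lborel (\<lambda>x. x * f x)"
  shows "norm (KF f \<xi> - KF f 0) \<le> \<bar>\<xi>\<bar> * (\<integral>x. \<bar>x * f x\<bar> \<partial>lborel)"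
proof -
  have "KF f \<xi> - KF f 0 = (\<integral>x. complex_of_real (f x) * cis (- (x * \<xi>)) - complex_of_real (f x) * cis (- (x * 0)) \<partial>lborel)"
    unfolding KF_def by (rule Bochner_Integration.integral_diff[symmetric]) (rule KF_int)+
  also have "norm \<dots> \<le> (\<integral>x. \<bar>\<xi>\<bar> * \<bar>x * f x\<bar> \<partial>lborel)"
  proof (rule Bochner_Integration.integral_norm_bound_integral)
    show "integrable lborel (\<lambda>x. complex_of_real (f x) * cis (- (x * \<xi>)) - complex_of_real (f x) * cis (- (x * 0)))"
      by (intro Bochner_Integration.integrable_diff KF_int)
    show "integrable lborel (\<lambda>x. \<bar>\<xi>\<bar> * \<bar>x * f x\<bar>)"
      by (intro integrable_mult_right integrable_abs i1)
    fix x :: real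
    have "norm (complex_of_real (f x) * cis (- (x * \<xi>)) - complex_of_real (f x) * cis (- (x * 0)))
        = \<bar>f x\<bar> * cmod (cis (- (x * \<xi>)) - 1)"
    proof -
      have "complex_of_real (f x) * cis (- (x * \<xi>)) - complex_of_real (f x) * cis (- (x * 0)) = complex_of_real (f x) * (cis (- (x * \<xi>)) - 1)"
        by (simp add: right_diff_distrib)
      then show ?thesis by (simp only: norm_mult norm_of_real)
    qed
    also have "\<dots> \<le> \<bar>f x\<bar> * \<bar>- (x * \<xi>)\<bar>"
      by (intro mult_left_mono cis_minus_one_bound) auto
    also have "\<dots> = \<bar>\<xi>\<bar> * \<bar>x * f x\<bar>" by (simp add: abs_mult)
    finally show "norm (complex_of_real (f x) * cis (- (x * \<xi>)) - complex_of_real (f x) * cis (- (x * 0))) \<le> \<bar>\<xi>\<bar> * \<bar>x * f x\<bar>" .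
  qed
  also have "\<dots> = \<bar>\<xi>\<bar> * (\<integral>x. \<bar>x * f x\<bar> \<partial>lborel)" by simp
  finally show ?thesis .
qed

lemma KF_even:
  assumes i2: "integrable lborel (\<lambda>x. x\<^sup>2 * f x)"
  shows "norm (KF f \<xi> + KF f (- \<xi>) - 2 * KF f 0) \<le> \<xi>\<^sup>2 * (\<integral>x. \<bar>x\<^sup>2 * f x\<bar> \<partial>lborel)"
proof -
  have "KF f \<xi> + KF f (- \<xi>) - 2 * KF f 0 = (\<integral>x. complex_of_real (f x) * cis (- (x * \<xi>)) + complex_of_real (f x) * cis (- (x * - \<xi>)) - 2 * (complex_of_real (f x) * cis (- (x * 0))) \<partial>lborel)"
    unfolding KF_def
    by (subst Bochner_Integration.integral_diff Bochner_Integration.integral_add integral_mult_right_zero;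
        (intro Bochner_Integration.integrable_diff Bochner_Integration.integrable_add integrable_mult_right KF_int)?)+ simp
  also have "norm \<dots> \<le> (\<integral>x. \<xi>\<^sup>2 * \<bar>x\<^sup>2 * f x\<bar> \<partial>lborel)"
  proof (rule Bochner_Integration.integral_norm_bound_integral)
    show "integrable lborel (\<lambda>x. complex_of_real (f x) * cis (- (x * \<xi>)) + complex_of_real (f x) * cis (- (x * - \<xi>)) - 2 * (complex_of_real (f x) * cis (- (x * 0))))"
      by (intro Bochner_Integration.integrable_diff Bochner_Integration.integrable_add integrable_mult_right KF_int)
    show "integrable lborel (\<lambda>x. \<xi>\<^sup>2 * \<bar>x\<^sup>2 * f x\<bar>)"
      by (intro integrable_mult_right integrable_abs i2)
    fix x :: real
    have "norm (complex_of_real (f x) * cis (- (x * \<xi>)) + complex_of_real (f x) * cis (- (x * - \<xi>)) - 2 * (complex_of_real (f x) * cis (- (x * 0))))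
        = \<bar>f x\<bar> * cmod (cis (- (x * \<xi>)) + cis (x * \<xi>) - 2)"
    proof -
      have "complex_of_real (f x) * cis (- (x * \<xi>)) + complex_of_real (f x) * cis (- (x * - \<xi>)) - 2 * (complex_of_real (f x) * cis (- (x * 0))) = complex_of_real (f x) * (cis (- (x * \<xi>)) + cis (x * \<xi>) - 2)"
        by (simp add: algebra_simps)
      then show ?thesis by (simp only: norm_mult norm_of_real)
    qed
    also have "\<dots> \<le> \<bar>f x\<bar> * (x * \<xi>)\<^sup>2"
      by (intro mult_left_mono cis_even_bound) auto
    also have "\<dots> = \<xi>\<^sup>2 * \<bar>x\<^sup>2 * f x\<bar>" by (simp add: abs_mult power_mult_distrib)
    finally show "norm (complex_of_real (f x) * cis (- (x * \<xi>)) + complex_of_real (f x) * cis (- (x * - \<xi>)) - 2 * (complex_of_real (f x) * cis (- (x * 0)))) \<le> \<xi>\<^sup>2 * \<bar>x\<^sup>2 * f x\<bar>" .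
  qed
  also have "\<dots> = \<xi>\<^sup>2 * (\<integral>x. \<bar>x\<^sup>2 * f x\<bar> \<partial>lborel)" by simp
  finally show ?thesis .
qed

lemma sin_int: "integrable lborel (\<lambda>x. f x * sin (x * \<xi>))"
  by (rule Bochner_Integration.integrable_bound[OF fi]) (auto simp: abs_mult intro!: mult_left_le)

lemma KF_odd: "KF f \<xi> - KF f (- \<xi>) = - 2 * \<i> * complex_of_real (\<integral>x. f x * sin (x * \<xi>) \<partial>lborel)"
proof -
  have "KF f \<xi> - KF f (- \<xi>) = (\<integral>x. complex_of_real (f x) * cis (- (x * \<xi>)) - complex_of_real (f x) * cis (- (x * - \<xi>)) \<partial>lborel)"
    unfolding KF_def by (rule Bochner_Integration.integral_diff[symmetric]) (rule KF_int)+
  also have "\<dots> = (\<integral>x. (- 2 * \<i>) * complex_of_real (f x * sin (x * \<xi>)) \<partial>lborel)"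
  proof (rule Bochner_Integration.integral_cong[OF refl])
    fix x
    have "cis (- (x * \<xi>)) - cis (x * \<xi>) = - 2 * \<i> * complex_of_real (sin (x * \<xi>))" by (rule cis_odd)
    then show "complex_of_real (f x) * cis (- (x * \<xi>)) - complex_of_real (f x) * cis (- (x * - \<xi>)) = (- 2 * \<i>) * complex_of_real (f x * sin (x * \<xi>))"
      by (simp add: right_diff_distrib[symmetric] mult_ac)
  qed
  also have "\<dots> = - 2 * \<i> * (\<integral>x. complex_of_real (f x * sin (x * \<xi>)) \<partial>lborel)"
    by (rule integral_mult_right_zero)
  also have "(\<integral>x. complex_of_real (f x * sin (x * \<xi>)) \<partial>lborel) = complex_of_real (\<integral>x. f x * sin (x * \<xi>) \<partial>lborel)"
    by (rule integral_complex_of_real)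
  finally show ?thesis .
qed

lemma KF_odd_lim:
  assumes i1: "integrable lborel (\<lambda>x. x * f x)" and i2: "integrable lborel (\<lambda>x. x\<^sup>2 * f x)"
    and e: "e \<longlonglongrightarrow> 0" and enz: "\<And>n. e n \<noteq> 0"
  shows "(\<lambda>n. ((\<integral>x. f x * sin (x * e n) \<partial>lborel) - e n * (\<integral>x. x * f x \<partial>lborel)) / (e n)\<^sup>2) \<longlonglongrightarrow> 0"
proof -
  define s where "s n x = f x * (sin (x * e n) - x * e n) / (e n)\<^sup>2" for n x
  have int_eq: "(\<integral>x. s n x \<partial>lborel) = ((\<integral>x. f x * sin (x * e n) \<partial>lborel) - e n * (\<integral>x. x * f x \<partial>lborel)) / (e n)\<^sup>2" for n
  proof -
    have "(\<integral>x. s n x \<partial>lborel) = (\<integral>x. f x * sin (x * e n) - e n * (x * f x) \<partial>lborel) / (e n)\<^sup>2"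
      unfolding s_def by (simp add: algebra_simps)
    also have "\<dots> = ((\<integral>x. f x * sin (x * e n) \<partial>lborel) - e n * (\<integral>x. x * f x \<partial>lborel)) / (e n)\<^sup>2"
      by (subst Bochner_Integration.integral_diff) (auto intro: sin_int integrable_mult_right i1)
    finally show ?thesis .
  qed
    have D1: "integrable lborel (\<lambda>x. \<bar>x\<^sup>2 * f x\<bar> / 2)" by (intro integrable_divide integrable_abs i2)
    have D2: "(\<lambda>x. 0::real) \<in> borel_measurable lborel" by simp
    have D3: "\<And>n. s n \<in> borel_measurable lborel" unfolding s_def by measurable
    have D4: "AE x in lborel. (\<lambda>n. s n x) \<longlonglongrightarrow> 0"
    proof (rule AE_I2)
      fix x
      have lim: "(\<lambda>n. \<bar>f x\<bar> * \<bar>x\<bar> ^ 3 / 6 * \<bar>e n\<bar>) \<longlonglongrightarrow> 0"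
        by (intro tendsto_mult_right_zero tendsto_rabs_zero e)
      have bd: "norm (s n x) \<le> \<bar>f x\<bar> * \<bar>x\<bar> ^ 3 / 6 * \<bar>e n\<bar>" for n
      proof -
        have "norm (s n x) = \<bar>f x\<bar> * \<bar>sin (x * e n) - x * e n\<bar> / (e n)\<^sup>2"
          unfolding s_def by (simp add: abs_mult)
        also have "\<dots> \<le> \<bar>f x\<bar> * (\<bar>x * e n\<bar> ^ 3 / 6) / (e n)\<^sup>2"
          by (intro divide_right_mono mult_left_mono sin_minus_id_bound3) auto
        also have "\<dots> = \<bar>f x\<bar> * \<bar>x\<bar> ^ 3 / 6 * \<bar>e n\<bar>"
          using enz[of n] by (simp add: abs_mult power_mult_distrib power2_eq_square power3_eq_cube field_simps)
        finally show ?thesis .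
      qed
      show "(\<lambda>n. s n x) \<longlonglongrightarrow> 0"
        by (rule Lim_null_comparison[OF always_eventually lim]) (use bd in blast)
    qed
    have D5: "\<And>n. AE x in lborel. norm (s n x) \<le> \<bar>x\<^sup>2 * f x\<bar> / 2"
    proof (rule AE_I2)
      fix n x
      have "norm (s n x) = \<bar>f x\<bar> * \<bar>sin (x * e n) - x * e n\<bar> / (e n)\<^sup>2"
        unfolding s_def by (simp add: abs_mult)
      also have "\<dots> \<le> \<bar>f x\<bar> * ((x * e n)\<^sup>2 / 2) / (e n)\<^sup>2"
        by (intro divide_right_mono mult_left_mono sin_minus_id_bound2) auto
      also have "\<dots> = \<bar>x\<^sup>2 * f x\<bar> / 2"
        using enz[of n] by (simp add: abs_mult power_mult_distrib field_simps)
      finally show "norm (s n x) \<le> \<bar>x\<^sup>2 * f x\<bar> / 2" .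
    qed
    have "(\<lambda>n. \<integral>x. s n x \<partial>lborel) \<longlonglongrightarrow> (\<integral>(x::real). 0 \<partial>lborel)"
      by (rule Bochner_Integration.integral_dominated_convergence[OF D2 D3 D1 D4 D5])
  then show ?thesis unfolding int_eq by simp
qed

end





lemma Fnorm_ge_L2: "L2w_sq 3 f \<le> (Fnorm 3 3 f)\<^sup>2"
proof -
  have h: "0 \<le> Hs_sq 3 f" unfolding Hs_sq_def by (intro integral_nonneg_AE) auto
  have l: "0 \<le> L2w_sq 3 f" unfolding L2w_sq_def by (intro integral_nonneg_AE) auto
  show ?thesis unfolding Fnorm_def using h l by simp
qed

lemma L2w_diff:
  assumes f: "L2w 3 f" and g: "L2w 3 g"
  shows "L2w 3 (\<lambda>x. f x - g x)"
    and "L2w_sq 3 f \<le> 2 * L2w_sq 3 (\<lambda>x. f x - g x) + 2 * L2w_sq 3 g"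
    and "(\<integral>x. (f x - g x)\<^sup>2 \<partial>lborel) \<le> L2w_sq 3 (\<lambda>x. f x - g x)"
proof -
  have pos: "0 \<le> 1 + x\<^sup>2" for x :: real by (simp add: add_nonneg_nonneg)
  note fm[measurable] = L2w3_meas[OF f] and gm[measurable] = L2w3_meas[OF g]
  have wf: "integrable lborel (\<lambda>x. (1 + x\<^sup>2) ^ 3 * (f x)\<^sup>2)" by (rule L2w3_w[OF f])
  have wg: "integrable lborel (\<lambda>x. (1 + x\<^sup>2) ^ 3 * (g x)\<^sup>2)" by (rule L2w3_w[OF g])
  have pw: "(a - b)\<^sup>2 \<le> 2 * a\<^sup>2 + 2 * b\<^sup>2" for a b :: real
    using zero_le_power2[of "a + b"] by (simp add: power2_eq_square algebra_simps)
  have pw2: "a\<^sup>2 \<le> 2 * (a - b)\<^sup>2 + 2 * b\<^sup>2" for a b :: real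
    using pw[of "a - b" "- b"] by simp
  have wd: "integrable lborel (\<lambda>x. (1 + x\<^sup>2) ^ 3 * (f x - g x)\<^sup>2)"
  proof (rule Bochner_Integration.integrable_bound)
    show "integrable lborel (\<lambda>x. 2 * ((1 + x\<^sup>2) ^ 3 * (f x)\<^sup>2) + 2 * ((1 + x\<^sup>2) ^ 3 * (g x)\<^sup>2))"
      using wf wg by simp
    show "(\<lambda>x. (1 + x\<^sup>2) ^ 3 * (f x - g x)\<^sup>2) \<in> borel_measurable lborel" by measurable
    show "AE x in lborel. norm ((1 + x\<^sup>2) ^ 3 * (f x - g x)\<^sup>2) \<le> norm (2 * ((1 + x\<^sup>2) ^ 3 * (f x)\<^sup>2) + 2 * ((1 + x\<^sup>2) ^ 3 * (g x)\<^sup>2))"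
    proof (rule AE_I2)
      fix x :: real
      have p3: "0 \<le> (1 + x\<^sup>2) ^ 3" using pos[of x] by simp
      have "(1 + x\<^sup>2) ^ 3 * (f x - g x)\<^sup>2 \<le> (1 + x\<^sup>2) ^ 3 * (2 * (f x)\<^sup>2 + 2 * (g x)\<^sup>2)"
        using p3 pw by (intro mult_left_mono) auto
      then show "norm ((1 + x\<^sup>2) ^ 3 * (f x - g x)\<^sup>2) \<le> norm (2 * ((1 + x\<^sup>2) ^ 3 * (f x)\<^sup>2) + 2 * ((1 + x\<^sup>2) ^ 3 * (g x)\<^sup>2))"
        using p3 by (simp add: algebra_simps)
    qed
  qed
  show L: "L2w 3 (\<lambda>x. f x - g x)" unfolding L2w_def using wd pos by simp
  have eqf: "L2w_sq 3 f = (\<integral>x. (1 + x\<^sup>2) ^ 3 * (f x)\<^sup>2 \<partial>lborel)" unfolding L2w_sq_def using pos by simp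
  have eqg: "L2w_sq 3 g = (\<integral>x. (1 + x\<^sup>2) ^ 3 * (g x)\<^sup>2 \<partial>lborel)" unfolding L2w_sq_def using pos by simp
  have eqd: "L2w_sq 3 (\<lambda>x. f x - g x) = (\<integral>x. (1 + x\<^sup>2) ^ 3 * (f x - g x)\<^sup>2 \<partial>lborel)" unfolding L2w_sq_def using pos by simp
  have "L2w_sq 3 f \<le> (\<integral>x. 2 * ((1 + x\<^sup>2) ^ 3 * (f x - g x)\<^sup>2) + 2 * ((1 + x\<^sup>2) ^ 3 * (g x)\<^sup>2) \<partial>lborel)"
    unfolding eqf
  proof (rule integral_mono)
    show "integrable lborel (\<lambda>x. (1 + x\<^sup>2) ^ 3 * (f x)\<^sup>2)" by (rule wf)
    show "integrable lborel (\<lambda>x. 2 * ((1 + x\<^sup>2) ^ 3 * (f x - g x)\<^sup>2) + 2 * ((1 + x\<^sup>2) ^ 3 * (g x)\<^sup>2))"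
      using wd wg by simp
    fix x :: real
    have p3: "0 \<le> (1 + x\<^sup>2) ^ 3" using pos[of x] by simp
    have "(1 + x\<^sup>2) ^ 3 * (f x)\<^sup>2 \<le> (1 + x\<^sup>2) ^ 3 * (2 * (f x - g x)\<^sup>2 + 2 * (g x)\<^sup>2)"
      using p3 pw2 by (intro mult_left_mono) auto
    then show "(1 + x\<^sup>2) ^ 3 * (f x)\<^sup>2 \<le> 2 * ((1 + x\<^sup>2) ^ 3 * (f x - g x)\<^sup>2) + 2 * ((1 + x\<^sup>2) ^ 3 * (g x)\<^sup>2)"
      by (simp add: algebra_simps)
  qed
  also have "\<dots> = 2 * L2w_sq 3 (\<lambda>x. f x - g x) + 2 * L2w_sq 3 g"
    unfolding eqd eqg using wd wg by simp
  finally show "L2w_sq 3 f \<le> 2 * L2w_sq 3 (\<lambda>x. f x - g x) + 2 * L2w_sq 3 g" .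
  show "(\<integral>x. (f x - g x)\<^sup>2 \<partial>lborel) \<le> L2w_sq 3 (\<lambda>x. f x - g x)"
    by (rule L2w3_b0[OF L])
qed

lemma sym_exp_bound:
  fixes \<beta> \<eta> T s \<xi> :: real
  assumes "\<beta> > 0" "\<eta> > 0" "T > 0" "0 \<le> s" "s \<le> T" "\<bar>\<xi>\<bar> \<le> min 1 (1 / (2 * T * (\<beta> + 2 * \<eta>)))"
  shows "norm (exp (sym \<beta> \<eta> \<xi> * complex_of_real s) - 1 - complex_of_real (s * \<eta> * \<bar>\<xi>\<bar>))
           \<le> (T\<^sup>2 * (\<beta> + 2 * \<eta>)\<^sup>2 + T * (\<beta> + \<eta>)) * \<xi>\<^sup>2"
    and "norm (exp (sym \<beta> \<eta> \<xi> * complex_of_real s) - 1)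
           \<le> (T * \<eta> + T\<^sup>2 * (\<beta> + 2 * \<eta>)\<^sup>2 + T * (\<beta> + \<eta>)) * \<bar>\<xi>\<bar>"
proof -
  define a where "a = \<bar>\<xi>\<bar>"
  have a0: "0 \<le> a" and a1: "a \<le> 1" and aT: "a \<le> 1 / (2 * T * (\<beta> + 2 * \<eta>))" using assms(6) by (auto simp: a_def)
  have xi2: "\<xi>\<^sup>2 = a * a" by (simp add: a_def power2_eq_square abs_mult_self_eq)
  have sq_le: "\<xi>\<^sup>2 \<le> a" unfolding xi2 using a0 a1 mult_left_le by blast
  have ns: "norm (sym \<beta> \<eta> \<xi>) \<le> (\<beta> + 2 * \<eta>) * a"
  proof -
    have "norm (sym \<beta> \<eta> \<xi>) \<le> norm (\<i> * complex_of_real (\<beta> * \<xi> * \<bar>\<xi>\<bar>)) + norm (complex_of_real (\<eta> * (\<xi>\<^sup>2 - \<bar>\<xi>\<bar>)))"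
      unfolding sym_def by (rule norm_triangle_ineq4)
    also have "\<dots> = \<bar>\<beta> * \<xi> * \<bar>\<xi>\<bar>\<bar> + \<bar>\<eta> * (\<xi>\<^sup>2 - \<bar>\<xi>\<bar>)\<bar>"
      by (simp only: norm_mult norm_of_real) simp
    also have "\<dots> = \<beta> * \<xi>\<^sup>2 + \<eta> * \<bar>\<xi>\<^sup>2 - a\<bar>"
      using assms(1,2) by (simp add: abs_mult a_def power2_eq_square abs_mult_self_eq)
    also have "\<dots> \<le> \<beta> * a + \<eta> * (a + a)"
    proof (rule add_mono)
      show "\<beta> * \<xi>\<^sup>2 \<le> \<beta> * a" using assms(1) sq_le by (intro mult_left_mono) auto
      have "\<bar>\<xi>\<^sup>2 - a\<bar> \<le> a + a" using sq_le a0 zero_le_power2[of \<xi>] unfolding abs_le_iff by linarith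
      then show "\<eta> * \<bar>\<xi>\<^sup>2 - a\<bar> \<le> \<eta> * (a + a)" using assms(2) by (intro mult_left_mono) auto
    qed
    finally show ?thesis by (simp add: algebra_simps)
  qed
  define z where "z = sym \<beta> \<eta> \<xi> * complex_of_real s"
  have nz: "norm z \<le> T * (\<beta> + 2 * \<eta>) * a"
  proof -
    have "norm z = s * norm (sym \<beta> \<eta> \<xi>)" unfolding z_def using assms(4) by (simp add: norm_mult)
    also have "\<dots> \<le> T * ((\<beta> + 2 * \<eta>) * a)"
      using assms ns by (intro mult_mono) auto
    finally show ?thesis by simp
  qed
  have pos: "0 < T * (\<beta> + 2 * \<eta>)" using assms by simp
  have nz2: "norm z \<le> 1 / 2"
  proof -
    have "T * (\<beta> + 2 * \<eta>) * a \<le> T * (\<beta> + 2 * \<eta>) * (1 / (2 * T * (\<beta> + 2 * \<eta>)))"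
      using pos aT by (intro mult_left_mono) auto
    also have "\<dots> = 1 / 2" using pos by (simp add: field_simps)
    finally show ?thesis using nz by simp
  qed
  have e1: "norm (exp z - 1 - z) \<le> (T * (\<beta> + 2 * \<eta>))\<^sup>2 * \<xi>\<^sup>2"
  proof -
    have "norm (exp z - 1 - z) \<le> (norm z)\<^sup>2" by (rule exp_quad_bound[OF nz2])
    also have "\<dots> \<le> (T * (\<beta> + 2 * \<eta>) * a)\<^sup>2" using nz by (intro power_mono) auto
    also have "\<dots> = (T * (\<beta> + 2 * \<eta>))\<^sup>2 * \<xi>\<^sup>2" unfolding xi2 by (simp add: power2_eq_square)
    finally show ?thesis .
  qed
  have zeq: "z - complex_of_real (s * \<eta> * \<bar>\<xi>\<bar>) = complex_of_real s * (\<i> * complex_of_real (\<beta> * \<xi> * \<bar>\<xi>\<bar>) - complex_of_real (\<eta> * \<xi>\<^sup>2))"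
    unfolding z_def sym_def by (simp add: algebra_simps)
  have e2: "norm (z - complex_of_real (s * \<eta> * \<bar>\<xi>\<bar>)) \<le> T * (\<beta> + \<eta>) * \<xi>\<^sup>2"
  proof -
    have "norm (\<i> * complex_of_real (\<beta> * \<xi> * \<bar>\<xi>\<bar>) - complex_of_real (\<eta> * \<xi>\<^sup>2))
        \<le> norm (\<i> * complex_of_real (\<beta> * \<xi> * \<bar>\<xi>\<bar>)) + norm (complex_of_real (\<eta> * \<xi>\<^sup>2))"
      by (rule norm_triangle_ineq4)
    also have "\<dots> \<le> \<beta> * \<xi>\<^sup>2 + \<eta> * \<xi>\<^sup>2"
      using assms(1,2) by (simp only: norm_mult norm_of_real) (simp add: abs_mult power2_eq_square abs_mult_self_eq)
    finally have "norm (\<i> * complex_of_real (\<beta> * \<xi> * \<bar>\<xi>\<bar>) - complex_of_real (\<eta> * \<xi>\<^sup>2)) \<le> (\<beta> + \<eta>) * \<xi>\<^sup>2"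
      by (simp add: algebra_simps)
    then have "s * norm (\<i> * complex_of_real (\<beta> * \<xi> * \<bar>\<xi>\<bar>) - complex_of_real (\<eta> * \<xi>\<^sup>2)) \<le> T * ((\<beta> + \<eta>) * \<xi>\<^sup>2)"
      using assms by (intro mult_mono) auto
    then show ?thesis unfolding zeq using assms(4) by (simp add: norm_mult mult.assoc)
  qed
  have "norm (exp z - 1 - complex_of_real (s * \<eta> * \<bar>\<xi>\<bar>)) \<le> norm (exp z - 1 - z) + norm (z - complex_of_real (s * \<eta> * \<bar>\<xi>\<bar>))"
  proof -
    have d: "(exp z - 1 - complex_of_real (s * \<eta> * \<bar>\<xi>\<bar>)) - (exp z - 1 - z) = z - complex_of_real (s * \<eta> * \<bar>\<xi>\<bar>)"
      by (simp only: diff_diff_eq2 diff_add_eq diff_diff_eq) (simp add: algebra_simps del: of_real_mult)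
    show ?thesis using norm_triangle_sub[of "exp z - 1 - complex_of_real (s * \<eta> * \<bar>\<xi>\<bar>)" "exp z - 1 - z"] unfolding d .
  qed
  also have "\<dots> \<le> (T * (\<beta> + 2 * \<eta>))\<^sup>2 * \<xi>\<^sup>2 + T * (\<beta> + \<eta>) * \<xi>\<^sup>2"
    using e1 e2 by (rule add_mono)
  also have "\<dots> = (T\<^sup>2 * (\<beta> + 2 * \<eta>)\<^sup>2 + T * (\<beta> + \<eta>)) * \<xi>\<^sup>2"
    unfolding power_mult_distrib by (simp add: algebra_simps)
  finally show 1: "norm (exp (sym \<beta> \<eta> \<xi> * complex_of_real s) - 1 - complex_of_real (s * \<eta> * \<bar>\<xi>\<bar>))
           \<le> (T\<^sup>2 * (\<beta> + 2 * \<eta>)\<^sup>2 + T * (\<beta> + \<eta>)) * \<xi>\<^sup>2" unfolding z_def .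
  have dd: "\<And>a b::complex. a - (a - b) = b" by simp
  have K0: "0 \<le> T\<^sup>2 * (\<beta> + 2 * \<eta>)\<^sup>2 + T * (\<beta> + \<eta>)" using assms by simp
  have "norm (exp (sym \<beta> \<eta> \<xi> * complex_of_real s) - 1) \<le> norm (exp (sym \<beta> \<eta> \<xi> * complex_of_real s) - 1 - complex_of_real (s * \<eta> * \<bar>\<xi>\<bar>)) + norm (complex_of_real (s * \<eta> * \<bar>\<xi>\<bar>))"
  proof -
    have d: "(exp (sym \<beta> \<eta> \<xi> * complex_of_real s) - 1) - (exp (sym \<beta> \<eta> \<xi> * complex_of_real s) - 1 - complex_of_real (s * \<eta> * \<bar>\<xi>\<bar>)) = complex_of_real (s * \<eta> * \<bar>\<xi>\<bar>)"
      by (rule dd)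
    show ?thesis using norm_triangle_sub[of "exp (sym \<beta> \<eta> \<xi> * complex_of_real s) - 1" "exp (sym \<beta> \<eta> \<xi> * complex_of_real s) - 1 - complex_of_real (s * \<eta> * \<bar>\<xi>\<bar>)"] unfolding d .
  qed
  also have "\<dots> \<le> (T\<^sup>2 * (\<beta> + 2 * \<eta>)\<^sup>2 + T * (\<beta> + \<eta>)) * a + T * \<eta> * a"
  proof (rule add_mono)
    show "norm (exp (sym \<beta> \<eta> \<xi> * complex_of_real s) - 1 - complex_of_real (s * \<eta> * \<bar>\<xi>\<bar>)) \<le> (T\<^sup>2 * (\<beta> + 2 * \<eta>)\<^sup>2 + T * (\<beta> + \<eta>)) * a"
      using 1 mult_left_mono[OF sq_le K0] by linarith
    show "norm (complex_of_real (s * \<eta> * \<bar>\<xi>\<bar>)) \<le> T * \<eta> * a"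
    proof -
      have "norm (complex_of_real (s * \<eta> * \<bar>\<xi>\<bar>)) = s * (\<eta> * a)"
        unfolding norm_of_real using assms by (simp add: abs_mult a_def)
      also have "\<dots> \<le> T * (\<eta> * a)" using assms a0 by (intro mult_right_mono) auto
      finally show ?thesis by (simp add: mult.assoc)
    qed
  qed
  finally show "norm (exp (sym \<beta> \<eta> \<xi> * complex_of_real s) - 1)
           \<le> (T * \<eta> + T\<^sup>2 * (\<beta> + 2 * \<eta>)\<^sup>2 + T * (\<beta> + \<eta>)) * \<bar>\<xi>\<bar>" by (simp add: a_def algebra_simps)
qed



lemma AE_sym_seq:
  assumes ae: "AE \<xi> in lborel. P \<xi>" and d: "(\<delta>::real) > 0"
  shows "\<exists>e. \<forall>n. 0 < e n \<and> e n < min \<delta> (inverse (real (Suc n))) \<and> P (e n) \<and> P (- e n)"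
proof -
  from ae obtain N where N1': "\<And>x. x \<in> space lborel - N \<Longrightarrow> P x" and N2: "N \<in> null_sets lborel"
    by (elim AE_E3) blast
  then have N1: "{x. \<not> P x} \<subseteq> N" by auto
  have "N \<in> null_sets (distr lborel borel uminus)" using N2 by (simp add: lborel_distr_uminus)
  then have M2: "uminus -` N \<in> null_sets lborel"
    by (subst (asm) null_sets_distr_iff) auto
  have U: "N \<union> uminus -` N \<in> null_sets lborel" using N2 M2 by (rule null_sets.Un)
  have "\<exists>x. 0 < x \<and> x < min \<delta> (inverse (real (Suc n))) \<and> P x \<and> P (- x)" for n
  proof (rule ccontr)
    define r where "r = min \<delta> (inverse (real (Suc n)))"
    have r: "r > 0" using d by (simp add: r_def)
    assume "\<not> ?thesis"
    note nt = this
    have "{0<..<r} \<subseteq> N \<union> uminus -` N"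
    proof
      fix x assume xr: "x \<in> {0<..<r}"
      show "x \<in> N \<union> uminus -` N"
      proof (rule ccontr)
        assume "x \<notin> N \<union> uminus -` N"
        then have "P x" "P (- x)" using N1 by auto
        then show False using nt xr by (auto simp: r_def)
      qed
    qed
    then have "{0<..<r} \<in> null_sets lborel"
      by (rule null_sets_subset[OF U, rotated]) simp
    then show False using r by (simp add: null_sets_def)
  qed
  then show ?thesis by metis
qed

lemma set_int_norm_const:
  fixes f :: "real \<Rightarrow> 'a::{banach, second_countable_topology}"
  assumes fi: "set_integrable lborel {0..t} f" and t: "0 \<le> t" and b: "\<And>\<tau>. \<tau> \<in> {0..t} \<Longrightarrow> norm (f \<tau>) \<le> B"
  shows "norm (LINT \<tau>:{0..t}|lborel. f \<tau>) \<le> B * t"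
proof -
  have "norm (LINT \<tau>:{0..t}|lborel. f \<tau>) \<le> (LINT \<tau>:{0..t}|lborel. norm (f \<tau>))"
    by (rule set_integral_norm_bound[OF fi])
  also have "\<dots> \<le> (LINT \<tau>:{0..t}|lborel. B)"
  proof (rule set_integral_mono)
    show "set_integrable lborel {0..t} (\<lambda>\<tau>. norm (f \<tau>))" by (rule set_integrable_norm[OF fi])
    show "set_integrable lborel {0..t} (\<lambda>\<tau>. B)"
      unfolding set_integrable_def by (rule borel_integrable_compact) (auto intro: continuous_intros)
    show "\<And>\<tau>. \<tau> \<in> {0..t} \<Longrightarrow> norm (f \<tau>) \<le> B" by (rule b)
  qed
  also have "\<dots> = B * t" using t by (simp add: set_integral_const)
  finally show ?thesis .
qed

lemma cont_int_zero:
  fixes h :: "real \<Rightarrow> real"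
  assumes c: "continuous_on {a..b} h" and nn: "\<And>x. x \<in> {a..b} \<Longrightarrow> 0 \<le> h x"
    and z: "(LINT x:{a..b}|lborel. h x) = 0" and ab: "a < b" and x: "x \<in> {a..b}"
  shows "h x = 0"
proof -
  have si: "set_integrable lborel {a..b} h"
    unfolding set_integrable_def by (rule borel_integrable_compact) (auto intro: c)
  have "integral {a..b} h = 0" using set_borel_integral_eq_integral(2)[OF si] z by simp
  moreover have "h integrable_on {a..b}" by (rule set_borel_integral_eq_integral(1)[OF si])
  ultimately have "(h has_integral 0) (cbox a b)" by (metis box_real(2) has_integral_integral)
  show ?thesis
  proof (rule has_integral_0_cbox_imp_0[where f = h and x = x])
    show "continuous_on (cbox a b) h" using c by simp
    show "\<And>y. y \<in> box a b \<Longrightarrow> 0 \<le> h y" using nn by auto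
    show "(h has_integral 0) (cbox a b)" by fact
    show "box a b \<noteq> {}" using ab by simp
    show "x \<in> cbox a b" using x by simp
  qed
qed





locale msol =
  fixes \<beta> \<eta> T :: real and u :: "real \<Rightarrow> real \<Rightarrow> real"
  assumes bpos: "\<beta> > 0" and epos: "\<eta> > 0" and Tpos: "T > 0" and ms: "mild_solution \<beta> \<eta> T u"
begin

lemma inL: "t \<in> {0..T} \<Longrightarrow> L2w 3 (u t)"
  using ms by (auto simp: mild_solution_def inF_def)

lemma contF: "t \<in> {0..T} \<Longrightarrow> ((\<lambda>\<tau>. Fnorm 3 3 (\<lambda>x. u \<tau> x - u t x)) \<longlongrightarrow> 0) (at t within {0..T})"
  using ms by (auto simp: mild_solution_def)

lemma ident: "t \<in> {0..T} \<Longrightarrow> AE \<xi> in lborel.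
        set_integrable lborel {0..t}
          (\<lambda>\<tau>. exp (sym \<beta> \<eta> \<xi> * complex_of_real (t - \<tau>)) * (\<i> * complex_of_real \<xi> / 2)
                 * FT (\<lambda>x. (u \<tau> x)\<^sup>2) \<xi>) \<and>
        FT (u t) \<xi> = exp (sym \<beta> \<eta> \<xi> * complex_of_real t) * FT (u 0) \<xi>
          - set_lebesgue_integral lborel {0..t}
              (\<lambda>\<tau>. exp (sym \<beta> \<eta> \<xi> * complex_of_real (t - \<tau>)) * (\<i> * complex_of_real \<xi> / 2)
                 * FT (\<lambda>x. (u \<tau> x)\<^sup>2) \<xi>)"
  using ms by (auto simp: mild_solution_def)

lemma L2_nonneg: "0 \<le> L2w_sq 3 f"
  unfolding L2w_sq_def by (intro integral_nonneg_AE) auto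

lemma Hs_nonneg: "0 \<le> Hs_sq 3 f"
  unfolding Hs_sq_def by (intro integral_nonneg_AE) auto

lemma Fnorm_nonneg: "0 \<le> Fnorm 3 3 f"
  unfolding Fnorm_def using Hs_nonneg[of f] L2_nonneg[of f] by simp

lemma local_bound:
  assumes t: "t \<in> {0..T}"
  shows "\<exists>d>0. \<forall>\<tau>\<in>{0..T}. dist \<tau> t < d \<longrightarrow> L2w_sq 3 (u \<tau>) \<le> 2 + 2 * L2w_sq 3 (u t)"
proof -
  have "\<forall>\<^sub>F \<tau> in at t within {0..T}. dist (Fnorm 3 3 (\<lambda>x. u \<tau> x - u t x)) 0 < 1"
    using contF[OF t] by (rule tendstoD) simp
  then obtain d where d: "d > 0" and dd: "\<And>\<tau>. \<tau> \<in> {0..T} \<Longrightarrow> \<tau> \<noteq> t \<Longrightarrow> dist \<tau> t < d \<Longrightarrow> dist (Fnorm 3 3 (\<lambda>x. u \<tau> x - u t x)) 0 < 1"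
    unfolding eventually_at by blast
  have "L2w_sq 3 (u \<tau>) \<le> 2 + 2 * L2w_sq 3 (u t)" if \<tau>: "\<tau> \<in> {0..T}" "dist \<tau> t < d" for \<tau>
  proof (cases "\<tau> = t")
    case True then show ?thesis using L2_nonneg[of "u t"] by simp
  next
    case False
    have F1: "Fnorm 3 3 (\<lambda>x. u \<tau> x - u t x) < 1" using dd[OF \<tau>(1) False \<tau>(2)] by (simp add: dist_real_def abs_less_iff)
    have F0: "0 \<le> Fnorm 3 3 (\<lambda>x. u \<tau> x - u t x)" by (rule Fnorm_nonneg)
    have "(Fnorm 3 3 (\<lambda>x. u \<tau> x - u t x))\<^sup>2 \<le> 1" using F0 F1 by (simp add: power_le_one)
    then have "L2w_sq 3 (\<lambda>x. u \<tau> x - u t x) \<le> 1" using Fnorm_ge_L2[of "\<lambda>x. u \<tau> x - u t x"] by linarith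
    moreover have "L2w_sq 3 (u \<tau>) \<le> 2 * L2w_sq 3 (\<lambda>x. u \<tau> x - u t x) + 2 * L2w_sq 3 (u t)"
      by (rule L2w_diff(2)[OF inL[OF \<tau>(1)] inL[OF t]])
    ultimately show ?thesis by linarith
  qed
  with d show ?thesis by blast
qed

lemma W_exists: "\<exists>W\<ge>0. \<forall>\<tau>\<in>{0..T}. L2w_sq 3 (u \<tau>) \<le> W"
proof -
  obtain d where d: "\<And>t. t \<in> {0..T} \<Longrightarrow> d t > 0 \<and> (\<forall>\<tau>\<in>{0..T}. dist \<tau> t < d t \<longrightarrow> L2w_sq 3 (u \<tau>) \<le> 2 + 2 * L2w_sq 3 (u t))"
    using local_bound by metis
  have cov: "{0..T} \<subseteq> (\<Union>t\<in>{0..T}. ball t (d t))"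
    using d by force
  obtain C where C: "C \<subseteq> {0..T}" "finite C" "{0..T} \<subseteq> (\<Union>t\<in>C. ball t (d t))"
    using compactE_image[OF compact_Icc _ cov] by blast
  define W where "W = (\<Sum>t\<in>C. 2 + 2 * \<bar>L2w_sq 3 (u t)\<bar>)"
  have W0: "0 \<le> W" unfolding W_def by (intro sum_nonneg) auto
  have "L2w_sq 3 (u \<tau>) \<le> W" if \<tau>: "\<tau> \<in> {0..T}" for \<tau>
  proof -
    obtain t where t: "t \<in> C" "\<tau> \<in> ball t (d t)" using C(3) \<tau> by blast
    have "L2w_sq 3 (u \<tau>) \<le> 2 + 2 * L2w_sq 3 (u t)"
      using d[of t] t C(1) \<tau> by (auto simp: dist_commute)
    also have "\<dots> \<le> 2 + 2 * \<bar>L2w_sq 3 (u t)\<bar>" by simp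
    also have "\<dots> \<le> W" unfolding W_def
      by (rule member_le_sum[OF t(1) _ C(2)]) simp
    finally show ?thesis .
  qed
  with W0 show ?thesis by blast
qed

end




lemma sq_diff_bound:
  assumes f: "L2w 3 f" and g: "L2w 3 g" and e: "e > 0"
  shows "\<bar>(\<integral>x. (f x)\<^sup>2 \<partial>lborel) - (\<integral>x. (g x)\<^sup>2 \<partial>lborel)\<bar>
     \<le> 2 * e * ((\<integral>x. (f x)\<^sup>2 \<partial>lborel) + (\<integral>x. (g x)\<^sup>2 \<partial>lborel)) + (\<integral>x. (f x - g x)\<^sup>2 \<partial>lborel) / e"
proof -
  have i1: "integrable lborel (\<lambda>x. (f x)\<^sup>2)" by (rule L2w3_s0[OF f])
  have i2: "integrable lborel (\<lambda>x. (g x)\<^sup>2)" by (rule L2w3_s0[OF g])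
  have i3: "integrable lborel (\<lambda>x. (f x - g x)\<^sup>2)" by (rule L2w3_s0[OF L2w_diff(1)[OF f g]])
  have "(\<integral>x. (f x)\<^sup>2 \<partial>lborel) - (\<integral>x. (g x)\<^sup>2 \<partial>lborel) = (\<integral>x. (f x)\<^sup>2 - (g x)\<^sup>2 \<partial>lborel)"
    using i1 i2 by simp
  also have "\<bar>\<dots>\<bar> \<le> (\<integral>x. 2 * e * ((f x)\<^sup>2 + (g x)\<^sup>2) + (f x - g x)\<^sup>2 / e \<partial>lborel)"
  proof (rule Bochner_Integration.integral_norm_bound_integral[where f = "\<lambda>x. (f x)\<^sup>2 - (g x)\<^sup>2", simplified])
    show "integrable lborel (\<lambda>x. (f x)\<^sup>2 - (g x)\<^sup>2)" using i1 i2 by simp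
    show "integrable lborel (\<lambda>x. 2 * e * ((f x)\<^sup>2 + (g x)\<^sup>2) + (f x - g x)\<^sup>2 / e)" using i1 i2 i3 by simp
    fix x
    have "\<bar>(f x)\<^sup>2 - (g x)\<^sup>2\<bar> = \<bar>(f x + g x) * (f x - g x)\<bar>" by (simp add: power2_eq_square algebra_simps)
    also have "\<dots> \<le> e * (f x + g x)\<^sup>2 + (f x - g x)\<^sup>2 / e" by (rule amgm_w[OF e])
    also have "e * (f x + g x)\<^sup>2 \<le> e * (2 * ((f x)\<^sup>2 + (g x)\<^sup>2))"
    proof (rule mult_left_mono)
      show "(f x + g x)\<^sup>2 \<le> 2 * ((f x)\<^sup>2 + (g x)\<^sup>2)"
        using zero_le_power2[of "f x - g x"] by (simp add: power2_eq_square algebra_simps)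
    qed (use e in simp)
    finally show "\<bar>(f x)\<^sup>2 - (g x)\<^sup>2\<bar> \<le> 2 * e * ((f x)\<^sup>2 + (g x)\<^sup>2) + (f x - g x)\<^sup>2 / e"
      by (simp add: algebra_simps)
  qed
  also have "\<dots> = 2 * e * ((\<integral>x. (f x)\<^sup>2 \<partial>lborel) + (\<integral>x. (g x)\<^sup>2 \<partial>lborel)) + (\<integral>x. (f x - g x)\<^sup>2 \<partial>lborel) / e"
    using i1 i2 i3 by simp
  finally show ?thesis .
qed

context msol
begin

definition gg :: "real \<Rightarrow> real" where "gg \<tau> = (\<integral>x. (u \<tau> x)\<^sup>2 \<partial>lborel)"

lemma gg_nonneg: "0 \<le> gg \<tau>"
  unfolding gg_def by (intro integral_nonneg_AE) auto

lemma gg_le: "\<tau> \<in> {0..T} \<Longrightarrow> gg \<tau> \<le> L2w_sq 3 (u \<tau>)"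
  unfolding gg_def by (rule L2w3_b0[OF inL])

lemma gg_cont:
  assumes W0: "0 \<le> W" and W: "\<forall>\<tau>\<in>{0..T}. L2w_sq 3 (u \<tau>) \<le> W"
  shows "continuous_on {0..T} gg"
  unfolding continuous_on_def
proof (intro ballI)
  fix t assume t: "t \<in> {0..T}"
  show "(gg \<longlongrightarrow> gg t) (at t within {0..T})"
  proof (rule tendstoI)
    fix \<epsilon> :: real assume \<epsilon>: "\<epsilon> > 0"
    define e where "e = \<epsilon> / (8 * (W + 1))"
    have e: "e > 0" using \<epsilon> W0 by (simp add: e_def)
    have "\<forall>\<^sub>F \<tau> in at t within {0..T}. dist (Fnorm 3 3 (\<lambda>x. u \<tau> x - u t x)) 0 < sqrt (e * \<epsilon> / 2)"
      using contF[OF t] by (rule tendstoD) (use e \<epsilon> in simp)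
    then obtain d where d: "d > 0" and dd: "\<And>\<tau>. \<tau> \<in> {0..T} \<Longrightarrow> \<tau> \<noteq> t \<Longrightarrow> dist \<tau> t < d \<Longrightarrow> dist (Fnorm 3 3 (\<lambda>x. u \<tau> x - u t x)) 0 < sqrt (e * \<epsilon> / 2)"
      unfolding eventually_at by blast
    have "dist (gg \<tau>) (gg t) < \<epsilon>" if \<tau>: "\<tau> \<in> {0..T}" "\<tau> \<noteq> t" "dist \<tau> t < d" for \<tau>
    proof -
      have F1: "Fnorm 3 3 (\<lambda>x. u \<tau> x - u t x) < sqrt (e * \<epsilon> / 2)"
        using dd[OF \<tau>] by (simp add: dist_real_def abs_less_iff)
      have "(Fnorm 3 3 (\<lambda>x. u \<tau> x - u t x))\<^sup>2 < (sqrt (e * \<epsilon> / 2))\<^sup>2"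
        using F1 Fnorm_nonneg by (intro power_strict_mono) auto
      then have "(Fnorm 3 3 (\<lambda>x. u \<tau> x - u t x))\<^sup>2 < e * \<epsilon> / 2" using e \<epsilon> by simp
      moreover have "(\<integral>x. (u \<tau> x - u t x)\<^sup>2 \<partial>lborel) \<le> (Fnorm 3 3 (\<lambda>x. u \<tau> x - u t x))\<^sup>2"
        using L2w_diff(3)[OF inL[OF \<tau>(1)] inL[OF t]] Fnorm_ge_L2[of "\<lambda>x. u \<tau> x - u t x"] by linarith
      ultimately have D: "(\<integral>x. (u \<tau> x - u t x)\<^sup>2 \<partial>lborel) < e * \<epsilon> / 2" by linarith
      have gb: "gg \<tau> + gg t \<le> 2 * W" using gg_le[OF \<tau>(1)] gg_le[OF t] W[rule_format, OF \<tau>(1)] W[rule_format, OF t] by linarith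
      have "\<bar>gg \<tau> - gg t\<bar> \<le> 2 * e * (gg \<tau> + gg t) + (\<integral>x. (u \<tau> x - u t x)\<^sup>2 \<partial>lborel) / e"
        unfolding gg_def by (rule sq_diff_bound[OF inL[OF \<tau>(1)] inL[OF t] e])
      also have "\<dots> < 2 * e * (2 * W) + (e * \<epsilon> / 2) / e"
        using gb D e by (intro add_le_less_mono mult_left_mono divide_strict_right_mono) auto
      also have "\<dots> = \<epsilon> * W / (2 * (W + 1)) + \<epsilon> / 2"
      proof -
        have "(e * \<epsilon> / 2) / e = \<epsilon> / 2" using e by simp
        moreover have "2 * e * (2 * W) = \<epsilon> * W / (2 * (W + 1))"
          using W0 unfolding e_def by (simp add: field_simps)
        ultimately show ?thesis by simp
      qed
      also have "\<dots> \<le> \<epsilon> / 2 + \<epsilon> / 2"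
        using \<epsilon> W0 by (simp add: field_simps)
      finally show ?thesis by (simp add: dist_real_def)
    qed
    then show "\<forall>\<^sub>F \<tau> in at t within {0..T}. dist (gg \<tau>) (gg t) < \<epsilon>"
      unfolding eventually_at using d by blast
  qed
qed

end




definition cc :: real where "cc = 1 / sqrt (2 * pi)"

lemma cc_pos: "cc > 0" by (simp add: cc_def)

lemma FT_cc: "FT f \<xi> = complex_of_real cc * KF f \<xi>"
  by (simp add: FT_KF cc_def)

context
  fixes f :: "real \<Rightarrow> real"
  assumes fL: "L2w 3 f"
begin

lemma FTL_norm: "norm (FT f \<xi>) \<le> cc * (\<integral>x. \<bar>f x\<bar> \<partial>lborel)"
  unfolding FT_cc using KF_norm[OF L2w3_meas[OF fL] L2w3_i0[OF fL], of \<xi>] cc_pos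
  by (simp add: norm_mult)

lemma FTL_diff: "norm (FT f \<xi> - FT f 0) \<le> cc * (\<bar>\<xi>\<bar> * (\<integral>x. \<bar>x * f x\<bar> \<partial>lborel))"
proof -
  have "FT f \<xi> - FT f 0 = complex_of_real cc * (KF f \<xi> - KF f 0)" unfolding FT_cc by (simp add: algebra_simps)
  then show ?thesis using KF_diff[OF L2w3_meas[OF fL] L2w3_i0[OF fL] L2w3_i1[OF fL], of \<xi>] cc_pos
    by (simp add: norm_mult)
qed

lemma FTL_even: "norm (FT f \<xi> + FT f (- \<xi>) - 2 * FT f 0) \<le> cc * (\<xi>\<^sup>2 * (\<integral>x. \<bar>x\<^sup>2 * f x\<bar> \<partial>lborel))"
proof -
  have "FT f \<xi> + FT f (- \<xi>) - 2 * FT f 0 = complex_of_real cc * (KF f \<xi> + KF f (- \<xi>) - 2 * KF f 0)" unfolding FT_cc by (simp add: algebra_simps)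
  then show ?thesis using KF_even[OF L2w3_meas[OF fL] L2w3_i0[OF fL] L2w3_i2[OF fL], of \<xi>] cc_pos
    by (simp add: norm_mult)
qed

lemma FTL_odd: "FT f \<xi> - FT f (- \<xi>) = complex_of_real cc * (- 2 * \<i> * complex_of_real (\<integral>x. f x * sin (x * \<xi>) \<partial>lborel))"
proof -
  have "FT f \<xi> - FT f (- \<xi>) = complex_of_real cc * (KF f \<xi> - KF f (- \<xi>))" unfolding FT_cc by (simp add: algebra_simps)
  then show ?thesis using KF_odd[OF L2w3_meas[OF fL] L2w3_i0[OF fL], of \<xi>] by simp
qed

lemma FTL_0: "FT f 0 = complex_of_real (cc * (\<integral>x. f x \<partial>lborel))"
  unfolding FT_cc KF_0[OF L2w3_meas[OF fL] L2w3_i0[OF fL]] by simp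

end

context
  fixes f :: "real \<Rightarrow> real" and W :: real
  assumes fL: "L2w 3 f" and fW: "L2w_sq 3 f \<le> W"
begin

lemma sq_facts:
  shows sq_m: "(\<lambda>x. (f x)\<^sup>2) \<in> borel_measurable lborel"
    and sq_i0: "integrable lborel (\<lambda>x. (f x)\<^sup>2)"
    and sq_i1: "integrable lborel (\<lambda>x. x * (f x)\<^sup>2)"
    and sq_i2: "integrable lborel (\<lambda>x. x\<^sup>2 * (f x)\<^sup>2)"
    and sq_b0: "(\<integral>x. \<bar>(f x)\<^sup>2\<bar> \<partial>lborel) \<le> W"
    and sq_b1: "(\<integral>x. \<bar>x * (f x)\<^sup>2\<bar> \<partial>lborel) \<le> W"
    and sq_b2: "(\<integral>x. \<bar>x\<^sup>2 * (f x)\<^sup>2\<bar> \<partial>lborel) \<le> W"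
proof -
  note m[measurable] = L2w3_meas[OF fL]
  show "(\<lambda>x. (f x)\<^sup>2) \<in> borel_measurable lborel" by measurable
  show "integrable lborel (\<lambda>x. (f x)\<^sup>2)" by (rule L2w3_s0[OF fL])
  show "integrable lborel (\<lambda>x. x * (f x)\<^sup>2)"
    by (rule Bochner_Integration.integrable_bound[OF L2w3_s1[OF fL]]) (auto simp: abs_mult)
  show "integrable lborel (\<lambda>x. x\<^sup>2 * (f x)\<^sup>2)" by (rule L2w3_s2[OF fL])
  show "(\<integral>x. \<bar>(f x)\<^sup>2\<bar> \<partial>lborel) \<le> W" using L2w3_b0[OF fL] fW by simp
  have "(\<integral>x. \<bar>x * (f x)\<^sup>2\<bar> \<partial>lborel) = (\<integral>x. \<bar>x\<bar> * (f x)\<^sup>2 \<partial>lborel)" by (simp add: abs_mult)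
  then show "(\<integral>x. \<bar>x * (f x)\<^sup>2\<bar> \<partial>lborel) \<le> W" using L2w3_b1[OF fL] fW by simp
  have "(\<integral>x. \<bar>x\<^sup>2 * (f x)\<^sup>2\<bar> \<partial>lborel) = (\<integral>x. x\<^sup>2 * (f x)\<^sup>2 \<partial>lborel)" by (simp add: abs_mult)
  then show "(\<integral>x. \<bar>x\<^sup>2 * (f x)\<^sup>2\<bar> \<partial>lborel) \<le> W" using L2w3_b2[OF fL] fW by simp
qed

lemma FTS_norm: "norm (FT (\<lambda>x. (f x)\<^sup>2) \<xi>) \<le> cc * W"
proof -
  have "norm (FT (\<lambda>x. (f x)\<^sup>2) \<xi>) \<le> cc * (\<integral>x. \<bar>(f x)\<^sup>2\<bar> \<partial>lborel)"
    unfolding FT_cc using KF_norm[OF sq_m sq_i0, of \<xi>] cc_pos by (simp add: norm_mult)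
  also have "\<dots> \<le> cc * W" using sq_b0 cc_pos by (intro mult_left_mono) auto
  finally show ?thesis .
qed

lemma FTS_diff: "norm (FT (\<lambda>x. (f x)\<^sup>2) \<xi> - FT (\<lambda>x. (f x)\<^sup>2) 0) \<le> cc * (\<bar>\<xi>\<bar> * W)"
proof -
  have "FT (\<lambda>x. (f x)\<^sup>2) \<xi> - FT (\<lambda>x. (f x)\<^sup>2) 0 = complex_of_real cc * (KF (\<lambda>x. (f x)\<^sup>2) \<xi> - KF (\<lambda>x. (f x)\<^sup>2) 0)"
    unfolding FT_cc by (simp add: algebra_simps)
  then have "norm (FT (\<lambda>x. (f x)\<^sup>2) \<xi> - FT (\<lambda>x. (f x)\<^sup>2) 0) \<le> cc * (\<bar>\<xi>\<bar> * (\<integral>x. \<bar>x * (f x)\<^sup>2\<bar> \<partial>lborel))"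
    using KF_diff[OF sq_m sq_i0 sq_i1, of \<xi>] cc_pos by (simp add: norm_mult)
  also have "\<dots> \<le> cc * (\<bar>\<xi>\<bar> * W)" using sq_b1 cc_pos by (intro mult_left_mono) auto
  finally show ?thesis .
qed

lemma FTS_even: "norm (FT (\<lambda>x. (f x)\<^sup>2) \<xi> + FT (\<lambda>x. (f x)\<^sup>2) (- \<xi>) - 2 * FT (\<lambda>x. (f x)\<^sup>2) 0) \<le> cc * (\<xi>\<^sup>2 * W)"
proof -
  have "FT (\<lambda>x. (f x)\<^sup>2) \<xi> + FT (\<lambda>x. (f x)\<^sup>2) (- \<xi>) - 2 * FT (\<lambda>x. (f x)\<^sup>2) 0 = complex_of_real cc * (KF (\<lambda>x. (f x)\<^sup>2) \<xi> + KF (\<lambda>x. (f x)\<^sup>2) (- \<xi>) - 2 * KF (\<lambda>x. (f x)\<^sup>2) 0)"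
    unfolding FT_cc by (simp add: algebra_simps)
  then have "norm (FT (\<lambda>x. (f x)\<^sup>2) \<xi> + FT (\<lambda>x. (f x)\<^sup>2) (- \<xi>) - 2 * FT (\<lambda>x. (f x)\<^sup>2) 0) \<le> cc * (\<xi>\<^sup>2 * (\<integral>x. \<bar>x\<^sup>2 * (f x)\<^sup>2\<bar> \<partial>lborel))"
    using KF_even[OF sq_m sq_i0 sq_i2, of \<xi>] cc_pos by (simp add: norm_mult)
  also have "\<dots> \<le> cc * (\<xi>\<^sup>2 * W)" using sq_b2 cc_pos by (intro mult_left_mono) auto
  finally show ?thesis .
qed

lemma FTS_0: "FT (\<lambda>x. (f x)\<^sup>2) 0 = complex_of_real (cc * (\<integral>x. (f x)\<^sup>2 \<partial>lborel))"
  unfolding FT_cc KF_0[OF sq_m sq_i0] by simp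

end





lemma alg_odd:
  fixes Ap Am Bp Bm Ep Em Jp Jm w c St S0 G :: complex
  assumes "Ap = Ep * Bp - Jp" "Am = Em * Bm - Jm" "Ap - Am = c * (- 2 * \<i> * St)" "Bp - Bm = c * (- 2 * \<i> * S0)"
  shows "(c * (- 2 * St + 2 * (1 + w) * S0 + G)) * \<i> = (Ep - 1 - w) * Bp - (Em - 1 - w) * Bm - (Jp - Jm - \<i> * c * G)"
proof -
  have "(Ep - 1 - w) * Bp - (Em - 1 - w) * Bm - (Jp - Jm - \<i> * c * G) = (Ep * Bp - Jp) - (Em * Bm - Jm) - (1 + w) * (Bp - Bm) + \<i> * c * G"
    by (simp add: algebra_simps)
  also have "\<dots> = (Ap - Am) - (1 + w) * (Bp - Bm) + \<i> * c * G" using assms(1,2) by simp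
  also have "\<dots> = c * (- 2 * \<i> * St) - (1 + w) * (c * (- 2 * \<i> * S0)) + \<i> * c * G" using assms(3,4) by simp
  also have "\<dots> = (c * (- 2 * St + 2 * (1 + w) * S0 + G)) * \<i>" by (simp add: algebra_simps)
  finally show ?thesis by simp
qed

lemma alg_pw:
  fixes Ep Em Cp Cm C0 w e :: complex
  shows "Ep * (\<i> * e / 2) * Cp - Em * (\<i> * (- e) / 2) * Cm - \<i> * (e * C0 * (1 + w))
       = (\<i> * e / 2) * ((1 + w) * (Cp + Cm - 2 * C0) + (Ep - 1 - w) * Cp + (Em - 1 - w) * Cm)"
  by (simp add: algebra_simps)

lemma alg_even:
  fixes Ap Am Bp Bm Ep Em Jp Jm w A0 B0 :: complex
  assumes "Ap = Ep * Bp - Jp" "Am = Em * Bm - Jm"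
  shows "2 * (A0 - B0) - 2 * w * B0 = - (Ap + Am - 2 * A0) + (1 + w) * (Bp + Bm - 2 * B0) + (Ep - 1 - w) * Bp + (Em - 1 - w) * Bm - (Jp + Jm)"
  unfolding assms by (simp add: algebra_simps)

lemma alg_pw_even:
  fixes Ep Em Cp Cm C0 e :: complex
  shows "Ep * (\<i> * e / 2) * Cp + Em * (\<i> * (- e) / 2) * Cm
       = (\<i> * e / 2) * ((Ep - 1) * Cp + (Cp - C0) - (Em - 1) * Cm - (Cm - C0))"
  by (simp add: algebra_simps)



context msol
begin

definition EE :: "real \<Rightarrow> real \<Rightarrow> complex" where
  "EE s \<xi> = exp (sym \<beta> \<eta> \<xi> * complex_of_real s)"

definition Ig :: "real \<Rightarrow> real \<Rightarrow> real \<Rightarrow> complex" where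
  "Ig t \<xi> \<tau> = EE (t - \<tau>) \<xi> * (\<i> * complex_of_real \<xi> / 2) * FT (\<lambda>x. (u \<tau> x)\<^sup>2) \<xi>"

lemma ident2: "t \<in> {0..T} \<Longrightarrow> AE \<xi> in lborel.
   set_integrable lborel {0..t} (Ig t \<xi>) \<and>
   FT (u t) \<xi> = EE t \<xi> * FT (u 0) \<xi> - (LINT \<tau>:{0..t}|lborel. Ig t \<xi> \<tau>)"
  using ident unfolding Ig_def EE_def by simp

definition dlt :: real where "dlt = min 1 (1 / (2 * T * (\<beta> + 2 * \<eta>)))"
definition KE :: real where "KE = T\<^sup>2 * (\<beta> + 2 * \<eta>)\<^sup>2 + T * (\<beta> + \<eta>)"

lemma dlt_pos: "dlt > 0" using bpos epos Tpos by (simp add: dlt_def)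
lemma dlt_le1: "dlt \<le> 1" by (simp add: dlt_def)
lemma KE_nonneg: "0 \<le> KE" using bpos epos Tpos by (simp add: KE_def)

lemma EE_bound:
  assumes "0 \<le> s" "s \<le> T" "0 < \<epsilon>" "\<epsilon> \<le> dlt"
  shows "norm (EE s \<epsilon> - 1 - complex_of_real (s * \<eta> * \<epsilon>)) \<le> KE * \<epsilon>\<^sup>2"
    and "norm (EE s (- \<epsilon>) - 1 - complex_of_real (s * \<eta> * \<epsilon>)) \<le> KE * \<epsilon>\<^sup>2"
    and "norm (EE s \<epsilon> - 1) \<le> (T * \<eta> + KE) * \<epsilon>"
    and "norm (EE s (- \<epsilon>) - 1) \<le> (T * \<eta> + KE) * \<epsilon>"
proof -
  have a1: "\<bar>\<epsilon>\<bar> \<le> min 1 (1 / (2 * T * (\<beta> + 2 * \<eta>)))" using assms by (simp add: dlt_def)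
  have a2: "\<bar>- \<epsilon>\<bar> \<le> min 1 (1 / (2 * T * (\<beta> + 2 * \<eta>)))" using assms by (simp add: dlt_def)
  note b1 = sym_exp_bound[OF bpos epos Tpos assms(1,2) a1]
  note b2 = sym_exp_bound[OF bpos epos Tpos assms(1,2) a2]
  show "norm (EE s \<epsilon> - 1 - complex_of_real (s * \<eta> * \<epsilon>)) \<le> KE * \<epsilon>\<^sup>2"
    using b1(1) assms(3) by (simp add: EE_def KE_def)
  show "norm (EE s (- \<epsilon>) - 1 - complex_of_real (s * \<eta> * \<epsilon>)) \<le> KE * \<epsilon>\<^sup>2"
    using b2(1) assms(3) by (simp add: EE_def KE_def)
  show "norm (EE s \<epsilon> - 1) \<le> (T * \<eta> + KE) * \<epsilon>"
    using b1(2) assms(3) by (simp add: EE_def KE_def add.assoc)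
  show "norm (EE s (- \<epsilon>) - 1) \<le> (T * \<eta> + KE) * \<epsilon>"
    using b2(2) assms(3) by (simp add: EE_def KE_def add.assoc)
qed

lemma set_integrable_cor:
  fixes f :: "real \<Rightarrow> real"
  assumes "set_integrable lborel S f"
  shows "set_integrable lborel S (\<lambda>x. complex_of_real (f x))"
proof -
  have "integrable lborel (\<lambda>x. complex_of_real (indicator S x *\<^sub>R f x))"
    using assms unfolding set_integrable_def by (rule integrable_of_real)
  then show ?thesis unfolding set_integrable_def by (simp add: scaleR_conv_of_real)
qed

lemma odd_core:
  fixes t \<epsilon> W :: real
  assumes t0: "0 < t" and tT: "t \<le> T" and W0: "0 \<le> W" and W: "\<forall>\<tau>\<in>{0..T}. L2w_sq 3 (u \<tau>) \<le> W"
    and e0: "0 < \<epsilon>" and ed: "\<epsilon> \<le> dlt"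
    and B0: "FT (u 0) 0 = 0"
    and Pp1: "set_integrable lborel {0..t} (Ig t \<epsilon>)"
    and Pp2: "FT (u t) \<epsilon> = EE t \<epsilon> * FT (u 0) \<epsilon> - (LINT \<tau>:{0..t}|lborel. Ig t \<epsilon> \<tau>)"
    and Pm1: "set_integrable lborel {0..t} (Ig t (- \<epsilon>))"
    and Pm2: "FT (u t) (- \<epsilon>) = EE t (- \<epsilon>) * FT (u 0) (- \<epsilon>) - (LINT \<tau>:{0..t}|lborel. Ig t (- \<epsilon>) \<tau>)"
    and gi1: "set_integrable lborel {0..t} gg"
    and gi2: "set_integrable lborel {0..t} (\<lambda>\<tau>. (t - \<tau>) * gg \<tau>)"
  shows "\<bar>- 2 * (\<integral>x. u t x * sin (x * \<epsilon>) \<partial>lborel) + 2 * (1 + t * \<eta> * \<epsilon>) * (\<integral>x. u 0 x * sin (x * \<epsilon>) \<partial>lborel)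
          + \<epsilon> * ((LINT \<tau>:{0..t}|lborel. gg \<tau>) + \<eta> * \<epsilon> * (LINT \<tau>:{0..t}|lborel. (t - \<tau>) * gg \<tau>))\<bar>
         \<le> (2 * KE * (\<integral>x. \<bar>x * u 0 x\<bar> \<partial>lborel) + T * W * (1 + T * \<eta> + 2 * KE) / 2) * \<epsilon> ^ 3"
proof -
  have tI: "t \<in> {0..T}" using t0 tT by simp
  have zI: "0 \<in> {0..T}" using Tpos by simp
  note Lt = inL[OF tI] and L0 = inL[OF zI]
  have e1: "\<epsilon> \<le> 1" using ed dlt_le1 by linarith
  define St where "St = (\<integral>x. u t x * sin (x * \<epsilon>) \<partial>lborel)"
  define S0 where "S0 = (\<integral>x. u 0 x * sin (x * \<epsilon>) \<partial>lborel)"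
  define G1 where "G1 = (LINT \<tau>:{0..t}|lborel. gg \<tau>)"
  define G2 where "G2 = (LINT \<tau>:{0..t}|lborel. (t - \<tau>) * gg \<tau>)"
  define V0 where "V0 = (\<integral>x. \<bar>x * u 0 x\<bar> \<partial>lborel)"
  define Q where "Q = - 2 * St + 2 * (1 + t * \<eta> * \<epsilon>) * S0 + \<epsilon> * (G1 + \<eta> * \<epsilon> * G2)"
  define r where "r \<tau> = gg \<tau> + \<eta> * \<epsilon> * ((t - \<tau>) * gg \<tau>)" for \<tau>
  define h where "h \<tau> = \<i> * complex_of_real (\<epsilon> * cc) * complex_of_real (r \<tau>)" for \<tau>
  define Jp where "Jp = (LINT \<tau>:{0..t}|lborel. Ig t \<epsilon> \<tau>)"
  define Jm where "Jm = (LINT \<tau>:{0..t}|lborel. Ig t (- \<epsilon>) \<tau>)"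
  define KB where "KB = \<epsilon> ^ 3 / 2 * cc * W * (1 + T * \<eta> + 2 * KE)"
  have V0: "0 \<le> V0" unfolding V0_def by (intro integral_nonneg_AE) auto
  have ri: "set_integrable lborel {0..t} r"
    unfolding r_def using gi1 gi2 by (intro set_integral_add set_integrable_mult_right) auto
  have rI: "(LINT \<tau>:{0..t}|lborel. r \<tau>) = G1 + \<eta> * \<epsilon> * G2"
    unfolding r_def G1_def G2_def using gi1 gi2 by (simp add: set_integral_add set_integrable_mult_right)
  have hi: "set_integrable lborel {0..t} h"
    unfolding h_def by (intro set_integrable_mult_right set_integrable_cor ri)
  have hI: "(LINT \<tau>:{0..t}|lborel. h \<tau>) = \<i> * complex_of_real cc * complex_of_real (\<epsilon> * (G1 + \<eta> * \<epsilon> * G2))"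
  proof -
    have "(LINT \<tau>:{0..t}|lborel. h \<tau>) = \<i> * complex_of_real (\<epsilon> * cc) * (LINT \<tau>:{0..t}|lborel. complex_of_real (r \<tau>))"
      unfolding h_def by (simp add: mult.assoc)
    also have "\<dots> = \<i> * complex_of_real (\<epsilon> * cc) * complex_of_real (G1 + \<eta> * \<epsilon> * G2)"
      by (simp only: set_integral_complex_of_real rI)
    finally show ?thesis by (simp add: mult_ac)
  qed
  have oddA: "FT (u t) \<epsilon> - FT (u t) (- \<epsilon>) = complex_of_real cc * (- 2 * \<i> * complex_of_real St)"
    unfolding St_def by (rule FTL_odd[OF Lt])
  have oddB: "FT (u 0) \<epsilon> - FT (u 0) (- \<epsilon>) = complex_of_real cc * (- 2 * \<i> * complex_of_real S0)"
    unfolding S0_def by (rule FTL_odd[OF L0])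
  have key: "(complex_of_real cc * (- 2 * complex_of_real St + 2 * (1 + complex_of_real (t * \<eta> * \<epsilon>)) * complex_of_real S0 + complex_of_real (\<epsilon> * (G1 + \<eta> * \<epsilon> * G2)))) * \<i>
      = (EE t \<epsilon> - 1 - complex_of_real (t * \<eta> * \<epsilon>)) * FT (u 0) \<epsilon> - (EE t (- \<epsilon>) - 1 - complex_of_real (t * \<eta> * \<epsilon>)) * FT (u 0) (- \<epsilon>)
        - (Jp - Jm - \<i> * complex_of_real cc * complex_of_real (\<epsilon> * (G1 + \<eta> * \<epsilon> * G2)))"
    by (rule alg_odd[OF Pp2[folded Jp_def] Pm2[folded Jm_def] oddA oddB])
  have lhs: "(complex_of_real cc * (- 2 * complex_of_real St + 2 * (1 + complex_of_real (t * \<eta> * \<epsilon>)) * complex_of_real S0 + complex_of_real (\<epsilon> * (G1 + \<eta> * \<epsilon> * G2)))) * \<i>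
      = complex_of_real (cc * Q) * \<i>"
    unfolding Q_def by simp
  have LJ: "(LINT \<tau>:{0..t}|lborel. Ig t \<epsilon> \<tau> - Ig t (- \<epsilon>) \<tau> - h \<tau>) = Jp - Jm - \<i> * complex_of_real cc * complex_of_real (\<epsilon> * (G1 + \<eta> * \<epsilon> * G2))"
    unfolding Jp_def Jm_def hI[symmetric] using Pp1 Pm1 hi by (simp add: set_integral_diff)
  have LJi: "set_integrable lborel {0..t} (\<lambda>\<tau>. Ig t \<epsilon> \<tau> - Ig t (- \<epsilon>) \<tau> - h \<tau>)"
    using Pp1 Pm1 hi by (intro set_integral_diff) auto
  have Bp: "norm (FT (u 0) \<epsilon>) \<le> cc * (\<epsilon> * V0)"
    using FTL_diff[OF L0, of \<epsilon>] B0 e0 by (simp add: V0_def)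
  have Bm: "norm (FT (u 0) (- \<epsilon>)) \<le> cc * (\<epsilon> * V0)"
    using FTL_diff[OF L0, of "- \<epsilon>"] B0 e0 by (simp add: V0_def)
  have rp: "norm ((EE t \<epsilon> - 1 - complex_of_real (t * \<eta> * \<epsilon>)) * FT (u 0) \<epsilon>) \<le> KE * \<epsilon>\<^sup>2 * (cc * (\<epsilon> * V0))"
    unfolding norm_mult using EE_bound(1)[of t \<epsilon>] t0 tT e0 ed Bp KE_nonneg
    by (intro mult_mono) auto
  have rm: "norm ((EE t (- \<epsilon>) - 1 - complex_of_real (t * \<eta> * \<epsilon>)) * FT (u 0) (- \<epsilon>)) \<le> KE * \<epsilon>\<^sup>2 * (cc * (\<epsilon> * V0))"
    unfolding norm_mult using EE_bound(2)[of t \<epsilon>] t0 tT e0 ed Bm KE_nonneg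
    by (intro mult_mono) auto
  have pw: "norm (Ig t \<epsilon> \<tau> - Ig t (- \<epsilon>) \<tau> - h \<tau>) \<le> KB" if \<tau>: "\<tau> \<in> {0..t}" for \<tau>
  proof -
    define s where "s = t - \<tau>"
    have s0: "0 \<le> s" and sT: "s \<le> T" using \<tau> tT by (auto simp: s_def)
    have \<tau>I: "\<tau> \<in> {0..T}" using \<tau> tT by auto
    note L\<tau> = inL[OF \<tau>I]
    have W\<tau>: "L2w_sq 3 (u \<tau>) \<le> W" using W \<tau>I by blast
    define Cp where "Cp = FT (\<lambda>x. (u \<tau> x)\<^sup>2) \<epsilon>"
    define Cm where "Cm = FT (\<lambda>x. (u \<tau> x)\<^sup>2) (- \<epsilon>)"
    define C0 where "C0 = FT (\<lambda>x. (u \<tau> x)\<^sup>2) 0"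
    define w where "w = complex_of_real (s * \<eta> * \<epsilon>)"
    have C0: "C0 = complex_of_real (cc * gg \<tau>)" unfolding C0_def gg_def by (rule FTS_0[OF L\<tau> W\<tau>])
    have hh: "h \<tau> = \<i> * (complex_of_real \<epsilon> * C0 * (1 + w))"
      unfolding h_def r_def C0 w_def s_def by (simp add: algebra_simps)
    have eq: "Ig t \<epsilon> \<tau> - Ig t (- \<epsilon>) \<tau> - h \<tau>
        = (\<i> * complex_of_real \<epsilon> / 2) * ((1 + w) * (Cp + Cm - 2 * C0) + (EE s \<epsilon> - 1 - w) * Cp + (EE s (- \<epsilon>) - 1 - w) * Cm)"
      unfolding hh Ig_def Cp_def Cm_def s_def[symmetric] using alg_pw[of "EE s \<epsilon>" "complex_of_real \<epsilon>" Cp "EE s (- \<epsilon>)" Cm C0 w]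
      by (simp add: Cp_def Cm_def)
    have n1: "norm (1 + w) \<le> 1 + T * \<eta>"
    proof -
      have "norm (1 + w) = 1 + s * \<eta> * \<epsilon>" unfolding w_def using s0 epos e0
        by (metis norm_of_real of_real_1 of_real_add abs_of_nonneg add_nonneg_nonneg zero_le_one mult_nonneg_nonneg less_imp_le)
      also have "\<dots> \<le> 1 + T * \<eta> * 1" using s0 sT epos e0 e1 by (intro add_left_mono mult_mono) auto
      finally show ?thesis by simp
    qed
    have nA: "norm ((1 + w) * (Cp + Cm - 2 * C0)) \<le> (1 + T * \<eta>) * (cc * (\<epsilon>\<^sup>2 * W))"
      unfolding norm_mult using n1 FTS_even[OF L\<tau> W\<tau>, of \<epsilon>] Tpos epos unfolding Cp_def Cm_def C0_def
      by (intro mult_mono) auto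
    have nB: "norm ((EE s \<epsilon> - 1 - w) * Cp) \<le> KE * \<epsilon>\<^sup>2 * (cc * W)"
      unfolding norm_mult w_def Cp_def using EE_bound(1)[OF s0 sT e0 ed] FTS_norm[OF L\<tau> W\<tau>, of \<epsilon>] KE_nonneg
      by (intro mult_mono) auto
    have nC: "norm ((EE s (- \<epsilon>) - 1 - w) * Cm) \<le> KE * \<epsilon>\<^sup>2 * (cc * W)"
      unfolding norm_mult w_def Cm_def using EE_bound(2)[OF s0 sT e0 ed] FTS_norm[OF L\<tau> W\<tau>, of "- \<epsilon>"] KE_nonneg
      by (intro mult_mono) auto
    have nS: "norm ((1 + w) * (Cp + Cm - 2 * C0) + (EE s \<epsilon> - 1 - w) * Cp + (EE s (- \<epsilon>) - 1 - w) * Cm)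
        \<le> (1 + T * \<eta>) * (cc * (\<epsilon>\<^sup>2 * W)) + KE * \<epsilon>\<^sup>2 * (cc * W) + KE * \<epsilon>\<^sup>2 * (cc * W)"
      by (intro norm_triangle_le add_mono nA nB nC)
    have "norm (Ig t \<epsilon> \<tau> - Ig t (- \<epsilon>) \<tau> - h \<tau>) = \<epsilon> / 2 * norm ((1 + w) * (Cp + Cm - 2 * C0) + (EE s \<epsilon> - 1 - w) * Cp + (EE s (- \<epsilon>) - 1 - w) * Cm)"
      unfolding eq norm_mult using e0 by (simp add: norm_mult norm_divide)
    also have "\<dots> \<le> \<epsilon> / 2 * ((1 + T * \<eta>) * (cc * (\<epsilon>\<^sup>2 * W)) + KE * \<epsilon>\<^sup>2 * (cc * W) + KE * \<epsilon>\<^sup>2 * (cc * W))"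
      using nS e0 by (intro mult_left_mono) auto
    also have "\<dots> = KB" unfolding KB_def by (simp add: power2_eq_square power3_eq_cube algebra_simps)
    finally show ?thesis .
  qed
  have nI: "norm (LINT \<tau>:{0..t}|lborel. Ig t \<epsilon> \<tau> - Ig t (- \<epsilon>) \<tau> - h \<tau>) \<le> KB * t"
    by (rule set_int_norm_const[OF LJi _ pw]) (use t0 in auto)
  have "cc * \<bar>Q\<bar> = norm (complex_of_real (cc * Q) * \<i>)" using cc_pos by (simp add: norm_mult abs_mult)
  also have "\<dots> = norm ((EE t \<epsilon> - 1 - complex_of_real (t * \<eta> * \<epsilon>)) * FT (u 0) \<epsilon> - (EE t (- \<epsilon>) - 1 - complex_of_real (t * \<eta> * \<epsilon>)) * FT (u 0) (- \<epsilon>)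
        - (LINT \<tau>:{0..t}|lborel. Ig t \<epsilon> \<tau> - Ig t (- \<epsilon>) \<tau> - h \<tau>))"
    unfolding LJ lhs[symmetric] key ..
  also have "\<dots> \<le> KE * \<epsilon>\<^sup>2 * (cc * (\<epsilon> * V0)) + KE * \<epsilon>\<^sup>2 * (cc * (\<epsilon> * V0)) + KB * t"
    by (intro norm_triangle_le_diff add_mono rp rm nI)
  also have "\<dots> \<le> KE * \<epsilon>\<^sup>2 * (cc * (\<epsilon> * V0)) + KE * \<epsilon>\<^sup>2 * (cc * (\<epsilon> * V0)) + KB * T"
  proof -
    have "0 \<le> KB" unfolding KB_def using e0 cc_pos W0 KE_nonneg epos Tpos by simp
    then show ?thesis using tT by (simp add: mult_left_mono)
  qed
  also have "\<dots> = cc * ((2 * KE * V0 + T * W * (1 + T * \<eta> + 2 * KE) / 2) * \<epsilon> ^ 3)"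
    unfolding KB_def by (simp add: power2_eq_square power3_eq_cube algebra_simps)
  finally have "cc * \<bar>Q\<bar> \<le> cc * ((2 * KE * V0 + T * W * (1 + T * \<eta> + 2 * KE) / 2) * \<epsilon> ^ 3)" .
  then have "\<bar>Q\<bar> \<le> (2 * KE * V0 + T * W * (1 + T * \<eta> + 2 * KE) / 2) * \<epsilon> ^ 3"
    using cc_pos by simp
  then show ?thesis unfolding Q_def St_def S0_def G1_def G2_def V0_def .
qed


lemma even_core:
  fixes t \<epsilon> W :: real
  assumes t0: "0 < t" and tT: "t \<le> T" and W0: "0 \<le> W" and W: "\<forall>\<tau>\<in>{0..T}. L2w_sq 3 (u \<tau>) \<le> W"
    and e0: "0 < \<epsilon>" and ed: "\<epsilon> \<le> dlt"
    and Pp1: "set_integrable lborel {0..t} (Ig t \<epsilon>)"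
    and Pp2: "FT (u t) \<epsilon> = EE t \<epsilon> * FT (u 0) \<epsilon> - (LINT \<tau>:{0..t}|lborel. Ig t \<epsilon> \<tau>)"
    and Pm1: "set_integrable lborel {0..t} (Ig t (- \<epsilon>))"
    and Pm2: "FT (u t) (- \<epsilon>) = EE t (- \<epsilon>) * FT (u 0) (- \<epsilon>) - (LINT \<tau>:{0..t}|lborel. Ig t (- \<epsilon>) \<tau>)"
  shows "norm (2 * (FT (u t) 0 - FT (u 0) 0) - 2 * complex_of_real (t * \<eta> * \<epsilon>) * FT (u 0) 0)
         \<le> (cc * (\<integral>x. \<bar>x\<^sup>2 * u t x\<bar> \<partial>lborel) + (1 + T * \<eta>) * (cc * (\<integral>x. \<bar>x\<^sup>2 * u 0 x\<bar> \<partial>lborel))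
             + 2 * KE * (cc * (\<integral>x. \<bar>u 0 x\<bar> \<partial>lborel)) + cc * W * (T * \<eta> + KE + 1) * T) * \<epsilon>\<^sup>2"
proof -
  have tI: "t \<in> {0..T}" using t0 tT by simp
  have zI: "0 \<in> {0..T}" using Tpos by simp
  note Lt = inL[OF tI] and L0 = inL[OF zI]
  have e1: "\<epsilon> \<le> 1" using ed dlt_le1 by linarith
  define XA where "XA = (\<integral>x. \<bar>x\<^sup>2 * u t x\<bar> \<partial>lborel)"
  define XB where "XB = (\<integral>x. \<bar>x\<^sup>2 * u 0 x\<bar> \<partial>lborel)"
  define YB where "YB = (\<integral>x. \<bar>u 0 x\<bar> \<partial>lborel)"
  define w where "w = complex_of_real (t * \<eta> * \<epsilon>)"
  define Jp where "Jp = (LINT \<tau>:{0..t}|lborel. Ig t \<epsilon> \<tau>)"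
  define Jm where "Jm = (LINT \<tau>:{0..t}|lborel. Ig t (- \<epsilon>) \<tau>)"
  define KB where "KB = \<epsilon>\<^sup>2 * cc * W * (T * \<eta> + KE + 1)"
  have eq: "2 * (FT (u t) 0 - FT (u 0) 0) - 2 * w * FT (u 0) 0
      = - (FT (u t) \<epsilon> + FT (u t) (- \<epsilon>) - 2 * FT (u t) 0) + (1 + w) * (FT (u 0) \<epsilon> + FT (u 0) (- \<epsilon>) - 2 * FT (u 0) 0)
        + (EE t \<epsilon> - 1 - w) * FT (u 0) \<epsilon> + (EE t (- \<epsilon>) - 1 - w) * FT (u 0) (- \<epsilon>) - (Jp + Jm)"
    by (rule alg_even[OF Pp2[folded Jp_def] Pm2[folded Jm_def]])
  have n1: "norm (1 + w) \<le> 1 + T * \<eta>"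
  proof -
    have "norm (1 + w) = 1 + t * \<eta> * \<epsilon>" unfolding w_def using t0 epos e0
      by (metis norm_of_real of_real_1 of_real_add abs_of_nonneg add_nonneg_nonneg zero_le_one mult_nonneg_nonneg less_imp_le)
    also have "\<dots> \<le> 1 + T * \<eta> * 1" using t0 tT epos e0 e1 by (intro add_left_mono mult_mono) auto
    finally show ?thesis by simp
  qed
  have nX: "norm (- (FT (u t) \<epsilon> + FT (u t) (- \<epsilon>) - 2 * FT (u t) 0)) \<le> cc * XA * \<epsilon>\<^sup>2"
  proof -
    have "norm (FT (u t) \<epsilon> + FT (u t) (- \<epsilon>) - 2 * FT (u t) 0) \<le> cc * (\<epsilon>\<^sup>2 * XA)"
      unfolding XA_def by (rule FTL_even[OF Lt])
    moreover have "cc * (\<epsilon>\<^sup>2 * XA) = cc * XA * \<epsilon>\<^sup>2" by (simp add: mult_ac)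
    ultimately show ?thesis by (metis norm_minus_cancel)
  qed
  have nY: "norm ((1 + w) * (FT (u 0) \<epsilon> + FT (u 0) (- \<epsilon>) - 2 * FT (u 0) 0)) \<le> (1 + T * \<eta>) * (cc * XB) * \<epsilon>\<^sup>2"
  proof -
    have "norm ((1 + w) * (FT (u 0) \<epsilon> + FT (u 0) (- \<epsilon>) - 2 * FT (u 0) 0)) \<le> (1 + T * \<eta>) * (cc * (\<epsilon>\<^sup>2 * XB))"
      unfolding norm_mult using n1 FTL_even[OF L0, of \<epsilon>] Tpos epos unfolding XB_def by (intro mult_mono) auto
    then show ?thesis by (simp add: mult_ac)
  qed
  have nP: "norm ((EE t \<epsilon> - 1 - w) * FT (u 0) \<epsilon>) \<le> KE * (cc * YB) * \<epsilon>\<^sup>2"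
  proof -
    have "norm ((EE t \<epsilon> - 1 - w) * FT (u 0) \<epsilon>) \<le> KE * \<epsilon>\<^sup>2 * (cc * YB)"
      unfolding norm_mult w_def YB_def using EE_bound(1)[of t \<epsilon>] t0 tT e0 ed FTL_norm[OF L0, of \<epsilon>] KE_nonneg
      by (intro mult_mono) auto
    then show ?thesis by (simp add: mult_ac)
  qed
  have nM: "norm ((EE t (- \<epsilon>) - 1 - w) * FT (u 0) (- \<epsilon>)) \<le> KE * (cc * YB) * \<epsilon>\<^sup>2"
  proof -
    have "norm ((EE t (- \<epsilon>) - 1 - w) * FT (u 0) (- \<epsilon>)) \<le> KE * \<epsilon>\<^sup>2 * (cc * YB)"
      unfolding norm_mult w_def YB_def using EE_bound(2)[of t \<epsilon>] t0 tT e0 ed FTL_norm[OF L0, of "- \<epsilon>"] KE_nonneg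
      by (intro mult_mono) auto
    then show ?thesis by (simp add: mult_ac)
  qed
  have Ji: "set_integrable lborel {0..t} (\<lambda>\<tau>. Ig t \<epsilon> \<tau> + Ig t (- \<epsilon>) \<tau>)"
    using Pp1 Pm1 by (intro set_integral_add) auto
  have JI: "Jp + Jm = (LINT \<tau>:{0..t}|lborel. Ig t \<epsilon> \<tau> + Ig t (- \<epsilon>) \<tau>)"
    unfolding Jp_def Jm_def using Pp1 Pm1 by (simp add: set_integral_add)
  have pw: "norm (Ig t \<epsilon> \<tau> + Ig t (- \<epsilon>) \<tau>) \<le> KB" if \<tau>: "\<tau> \<in> {0..t}" for \<tau>
  proof -
    define s where "s = t - \<tau>"
    have s0: "0 \<le> s" and sT: "s \<le> T" using \<tau> tT by (auto simp: s_def)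
    have \<tau>I: "\<tau> \<in> {0..T}" using \<tau> tT by auto
    note L\<tau> = inL[OF \<tau>I]
    have W\<tau>: "L2w_sq 3 (u \<tau>) \<le> W" using W \<tau>I by blast
    define Cp where "Cp = FT (\<lambda>x. (u \<tau> x)\<^sup>2) \<epsilon>"
    define Cm where "Cm = FT (\<lambda>x. (u \<tau> x)\<^sup>2) (- \<epsilon>)"
    define C0 where "C0 = FT (\<lambda>x. (u \<tau> x)\<^sup>2) 0"
    have eq: "Ig t \<epsilon> \<tau> + Ig t (- \<epsilon>) \<tau>
        = (\<i> * complex_of_real \<epsilon> / 2) * ((EE s \<epsilon> - 1) * Cp + (Cp - C0) - (EE s (- \<epsilon>) - 1) * Cm - (Cm - C0))"
      unfolding Ig_def Cp_def Cm_def s_def[symmetric] using alg_pw_even[of "EE s \<epsilon>" "complex_of_real \<epsilon>" Cp "EE s (- \<epsilon>)" Cm C0]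
      by (simp add: Cp_def Cm_def)
    have a1: "norm ((EE s \<epsilon> - 1) * Cp) \<le> (T * \<eta> + KE) * \<epsilon> * (cc * W)"
      unfolding norm_mult Cp_def using EE_bound(3)[OF s0 sT e0 ed] FTS_norm[OF L\<tau> W\<tau>, of \<epsilon>] KE_nonneg Tpos epos e0
      by (intro mult_mono) auto
    have a2: "norm (Cp - C0) \<le> cc * (\<epsilon> * W)"
      unfolding Cp_def C0_def using FTS_diff[OF L\<tau> W\<tau>, of \<epsilon>] e0 by simp
    have a3: "norm ((EE s (- \<epsilon>) - 1) * Cm) \<le> (T * \<eta> + KE) * \<epsilon> * (cc * W)"
      unfolding norm_mult Cm_def using EE_bound(4)[OF s0 sT e0 ed] FTS_norm[OF L\<tau> W\<tau>, of "- \<epsilon>"] KE_nonneg Tpos epos e0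
      by (intro mult_mono) auto
    have a4: "norm (Cm - C0) \<le> cc * (\<epsilon> * W)"
      unfolding Cm_def C0_def using FTS_diff[OF L\<tau> W\<tau>, of "- \<epsilon>"] e0 by simp
    have nS: "norm ((EE s \<epsilon> - 1) * Cp + (Cp - C0) - (EE s (- \<epsilon>) - 1) * Cm - (Cm - C0))
        \<le> (T * \<eta> + KE) * \<epsilon> * (cc * W) + cc * (\<epsilon> * W) + (T * \<eta> + KE) * \<epsilon> * (cc * W) + cc * (\<epsilon> * W)"
      by (intro norm_triangle_le_diff norm_triangle_le add_mono a1 a2 a3 a4)
    have "norm (Ig t \<epsilon> \<tau> + Ig t (- \<epsilon>) \<tau>) = \<epsilon> / 2 * norm ((EE s \<epsilon> - 1) * Cp + (Cp - C0) - (EE s (- \<epsilon>) - 1) * Cm - (Cm - C0))"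
      unfolding eq norm_mult using e0 by (simp add: norm_mult norm_divide)
    also have "\<dots> \<le> \<epsilon> / 2 * ((T * \<eta> + KE) * \<epsilon> * (cc * W) + cc * (\<epsilon> * W) + (T * \<eta> + KE) * \<epsilon> * (cc * W) + cc * (\<epsilon> * W))"
      using nS e0 by (intro mult_left_mono) auto
    also have "\<dots> = KB" unfolding KB_def by (simp add: power2_eq_square algebra_simps)
    finally show ?thesis .
  qed
  have nJ: "norm (Jp + Jm) \<le> KB * T"
  proof -
    have "norm (Jp + Jm) \<le> KB * t" unfolding JI by (rule set_int_norm_const[OF Ji _ pw]) (use t0 in auto)
    also have "\<dots> \<le> KB * T"
    proof -
      have "0 \<le> KB" unfolding KB_def using cc_pos W0 KE_nonneg epos Tpos by simp
      then show ?thesis using tT by (simp add: mult_left_mono)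
    qed
    finally show ?thesis .
  qed
  have "norm (2 * (FT (u t) 0 - FT (u 0) 0) - 2 * w * FT (u 0) 0)
      \<le> cc * XA * \<epsilon>\<^sup>2 + (1 + T * \<eta>) * (cc * XB) * \<epsilon>\<^sup>2 + KE * (cc * YB) * \<epsilon>\<^sup>2 + KE * (cc * YB) * \<epsilon>\<^sup>2 + KB * T"
    unfolding eq by (intro norm_triangle_le_diff norm_triangle_le add_mono nX nY nP nM nJ)
  also have "\<dots> = (cc * XA + (1 + T * \<eta>) * (cc * XB) + 2 * KE * (cc * YB) + cc * W * (T * \<eta> + KE + 1) * T) * \<epsilon>\<^sup>2"
    unfolding KB_def by (simp add: algebra_simps)
  finally show ?thesis unfolding w_def XA_def XB_def YB_def .
qed


end






context msol
begin

lemma seq_lim: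
  assumes "\<And>n. 0 < e n \<and> e n < min dlt (inverse (real (Suc n)))"
  shows "e \<longlonglongrightarrow> 0"
proof (rule Lim_null_comparison[OF always_eventually LIMSEQ_inverse_real_of_nat])
  show "\<forall>n. norm (e n) \<le> inverse (real (Suc n))"
    using assms by (auto simp: less_imp_le)
qed

lemma B0_zero: "FT (u 0) 0 = 0"
proof -
  obtain W where W0: "0 \<le> W" and W: "\<forall>\<tau>\<in>{0..T}. L2w_sq 3 (u \<tau>) \<le> W" using W_exists by blast
  have TI: "T \<in> {0..T}" using Tpos by simp
  obtain e where e: "\<And>n. 0 < e n \<and> e n < min dlt (inverse (real (Suc n)))
      \<and> (set_integrable lborel {0..T} (Ig T (e n)) \<and> FT (u T) (e n) = EE T (e n) * FT (u 0) (e n) - (LINT \<tau>:{0..T}|lborel. Ig T (e n) \<tau>))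
      \<and> (set_integrable lborel {0..T} (Ig T (- e n)) \<and> FT (u T) (- e n) = EE T (- e n) * FT (u 0) (- e n) - (LINT \<tau>:{0..T}|lborel. Ig T (- e n) \<tau>))"
    using AE_sym_seq[OF ident2[OF TI] dlt_pos] by blast
  have el: "e \<longlonglongrightarrow> 0" by (rule seq_lim) (use e in blast)
  define K where "K = cc * (\<integral>x. \<bar>x\<^sup>2 * u T x\<bar> \<partial>lborel) + (1 + T * \<eta>) * (cc * (\<integral>x. \<bar>x\<^sup>2 * u 0 x\<bar> \<partial>lborel))
             + 2 * KE * (cc * (\<integral>x. \<bar>u 0 x\<bar> \<partial>lborel)) + cc * W * (T * \<eta> + KE + 1) * T"
  have bnd: "norm (2 * (FT (u T) 0 - FT (u 0) 0) + e n *\<^sub>R (complex_of_real (- 2 * T * \<eta>) * FT (u 0) 0) + e n *\<^sub>R 0) \<le> K * (e n)\<^sup>2" for n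
  proof -
    have en: "0 < e n" "e n \<le> dlt" using e[of n] by auto
    have "norm (2 * (FT (u T) 0 - FT (u 0) 0) - 2 * complex_of_real (T * \<eta> * e n) * FT (u 0) 0) \<le> K * (e n)\<^sup>2"
      unfolding K_def by (rule even_core[OF Tpos order_refl W0 W en]) (use e[of n] in blast)+
    moreover have "2 * (FT (u T) 0 - FT (u 0) 0) + e n *\<^sub>R (complex_of_real (- 2 * T * \<eta>) * FT (u 0) 0) + e n *\<^sub>R 0
        = 2 * (FT (u T) 0 - FT (u 0) 0) - 2 * complex_of_real (T * \<eta> * e n) * FT (u 0) 0"
      by (simp add: scaleR_conv_of_real algebra_simps)
    ultimately show ?thesis by simp
  qed
  have "2 * (FT (u T) 0 - FT (u 0) 0) = 0 \<and> complex_of_real (- 2 * T * \<eta>) * FT (u 0) 0 = 0"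
    by (rule limit_lemma[OF el _ tendsto_const bnd]) (use e in blast)
  then show ?thesis using Tpos epos by simp
qed

lemma mom:
  assumes t0: "0 < t" and tT: "t \<le> T"
  shows "2 * t * (\<integral>x. x * u 0 x \<partial>lborel) + (LINT \<tau>:{0..t}|lborel. (t - \<tau>) * gg \<tau>) = 0"
proof -
  obtain W where W0: "0 \<le> W" and W: "\<forall>\<tau>\<in>{0..T}. L2w_sq 3 (u \<tau>) \<le> W" using W_exists by blast
  have tI: "t \<in> {0..T}" using t0 tT by simp
  have zI: "0 \<in> {0..T}" using Tpos by simp
  note Lt = inL[OF tI] and L0 = inL[OF zI]
  have gc: "continuous_on {0..t} gg" by (rule continuous_on_subset[OF gg_cont[OF W0 W]]) (use tT in auto)
  have gi1: "set_integrable lborel {0..t} gg"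
    unfolding set_integrable_def by (rule borel_integrable_compact) (auto intro: gc)
  have gi2: "set_integrable lborel {0..t} (\<lambda>\<tau>. (t - \<tau>) * gg \<tau>)"
    unfolding set_integrable_def by (rule borel_integrable_compact) (auto intro!: continuous_intros gc)
  obtain e where e: "\<And>n. 0 < e n \<and> e n < min dlt (inverse (real (Suc n)))
      \<and> (set_integrable lborel {0..t} (Ig t (e n)) \<and> FT (u t) (e n) = EE t (e n) * FT (u 0) (e n) - (LINT \<tau>:{0..t}|lborel. Ig t (e n) \<tau>))
      \<and> (set_integrable lborel {0..t} (Ig t (- e n)) \<and> FT (u t) (- e n) = EE t (- e n) * FT (u 0) (- e n) - (LINT \<tau>:{0..t}|lborel. Ig t (- e n) \<tau>))"
    using AE_sym_seq[OF ident2[OF tI] dlt_pos] by blast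
  have el: "e \<longlonglongrightarrow> 0" by (rule seq_lim) (use e in blast)
  have enz: "e n \<noteq> 0" for n using e[of n] by auto
  define mt where "mt = (\<integral>x. x * u t x \<partial>lborel)"
  define m0 where "m0 = (\<integral>x. x * u 0 x \<partial>lborel)"
  define G1 where "G1 = (LINT \<tau>:{0..t}|lborel. gg \<tau>)"
  define G2 where "G2 = (LINT \<tau>:{0..t}|lborel. (t - \<tau>) * gg \<tau>)"
  define St where "St n = (\<integral>x. u t x * sin (x * e n) \<partial>lborel)" for n
  define S0 where "S0 n = (\<integral>x. u 0 x * sin (x * e n) \<partial>lborel)" for n
  define dt where "dt n = (St n - e n * mt) / (e n)\<^sup>2" for n
  define d0 where "d0 n = (S0 n - e n * m0) / (e n)\<^sup>2" for n
  define K where "K = 2 * KE * (\<integral>x. \<bar>x * u 0 x\<bar> \<partial>lborel) + T * W * (1 + T * \<eta> + 2 * KE) / 2"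
  define \<alpha> where "\<alpha> = - 2 * mt + 2 * m0 + G1"
  define \<beta>' where "\<beta>' = \<eta> * (2 * t * m0 + G2)"
  define d where "d n = - 2 * dt n + 2 * (1 + t * \<eta> * e n) * d0 n" for n
  have dtl: "dt \<longlonglongrightarrow> 0"
    unfolding dt_def St_def mt_def
    by (rule KF_odd_lim[OF L2w3_meas[OF Lt] L2w3_i0[OF Lt] L2w3_i1[OF Lt] L2w3_i2[OF Lt] el enz])
  have d0l: "d0 \<longlonglongrightarrow> 0"
    unfolding d0_def S0_def m0_def
    by (rule KF_odd_lim[OF L2w3_meas[OF L0] L2w3_i0[OF L0] L2w3_i1[OF L0] L2w3_i2[OF L0] el enz])
  have dl: "d \<longlonglongrightarrow> 0"
  proof -
    have "d \<longlonglongrightarrow> - 2 * 0 + 2 * (1 + t * \<eta> * 0) * 0"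
      unfolding d_def by (intro tendsto_intros dtl d0l el)
    then show ?thesis by simp
  qed
  have bnd: "norm (\<alpha> + e n *\<^sub>R \<beta>' + e n *\<^sub>R d n) \<le> K * (e n)\<^sup>2" for n
  proof -
    have en: "0 < e n" "e n \<le> dlt" using e[of n] by auto
    have Q: "\<bar>- 2 * St n + 2 * (1 + t * \<eta> * e n) * S0 n + e n * (G1 + \<eta> * e n * G2)\<bar> \<le> K * e n ^ 3"
      unfolding St_def S0_def G1_def G2_def K_def
      by (rule odd_core[OF t0 tT W0 W en B0_zero _ _ _ _ gi1 gi2]) (use e[of n] in blast)+
    have Sx: "St n = e n * mt + (e n)\<^sup>2 * dt n" "S0 n = e n * m0 + (e n)\<^sup>2 * d0 n"
      unfolding dt_def d0_def using enz[of n] by (simp_all add: field_simps)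
    have "- 2 * St n + 2 * (1 + t * \<eta> * e n) * S0 n + e n * (G1 + \<eta> * e n * G2) = e n * (\<alpha> + e n *\<^sub>R \<beta>' + e n *\<^sub>R d n)"
      unfolding Sx \<alpha>_def \<beta>'_def d_def by (simp add: algebra_simps power2_eq_square)
    with Q have "e n * \<bar>\<alpha> + e n *\<^sub>R \<beta>' + e n *\<^sub>R d n\<bar> \<le> e n * (K * (e n)\<^sup>2)"
      using en by (simp add: abs_mult power3_eq_cube power2_eq_square mult_ac)
    then show ?thesis using en by simp
  qed
  have "\<alpha> = 0 \<and> \<beta>' = 0"
    by (rule limit_lemma[OF el _ dl bnd]) (use e in blast)
  then show ?thesis using epos unfolding \<beta>'_def m0_def G2_def by simp
qed

end



context msol
begin

lemma gi2_lemma: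
  assumes "0 \<le> t" "t \<le> T"
  shows "set_integrable lborel {0..t} (\<lambda>\<tau>. (t - \<tau>) * gg \<tau>)"
proof -
  obtain W where W0: "0 \<le> W" and W: "\<forall>\<tau>\<in>{0..T}. L2w_sq 3 (u \<tau>) \<le> W" using W_exists by blast
  have gc: "continuous_on {0..t} gg"
    by (rule continuous_on_subset[OF gg_cont[OF W0 W]]) (use assms in auto)
  show ?thesis
    unfolding set_integrable_def by (rule borel_integrable_compact) (auto intro!: continuous_intros gc)
qed

lemma gg_zero: "t \<in> {0..T} \<Longrightarrow> gg t = 0"
proof -
  obtain W where W0: "0 \<le> W" and W: "\<forall>\<tau>\<in>{0..T}. L2w_sq 3 (u \<tau>) \<le> W" using W_exists by blast
  define b where "b = (\<integral>x. x * u 0 x \<partial>lborel)"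
  have G2b: "\<bar>LINT \<tau>:{0..t}|lborel. (t - \<tau>) * gg \<tau>\<bar> \<le> (t * W) * t" if t: "0 < t" "t \<le> T" for t
  proof -
    have "norm (LINT \<tau>:{0..t}|lborel. (t - \<tau>) * gg \<tau>) \<le> (t * W) * t"
    proof (rule set_int_norm_const[OF gi2_lemma])
      fix \<tau> assume \<tau>: "\<tau> \<in> {0..t}"
      then have \<tau>I: "\<tau> \<in> {0..T}" using t by auto
      have "gg \<tau> \<le> W" using gg_le[OF \<tau>I] W \<tau>I by fastforce
      then show "norm ((t - \<tau>) * gg \<tau>) \<le> t * W"
        using \<tau> gg_nonneg[of \<tau>] W0 by (auto simp: abs_mult intro!: mult_mono)
    qed (use t in auto)
    then show ?thesis by simp
  qed
  have b0: "b = 0"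
  proof (rule ccontr)
    assume bn: "b \<noteq> 0"
    define t where "t = min T (\<bar>b\<bar> / (W + 1))"
    have t0: "0 < t" using bn W0 Tpos by (simp add: t_def)
    have tT: "t \<le> T" by (simp add: t_def)
    have eqn: "2 * t * b = - (LINT \<tau>:{0..t}|lborel. (t - \<tau>) * gg \<tau>)" using mom[OF t0 tT] unfolding b_def by linarith
    have e1: "\<bar>2 * t * b\<bar> \<le> t * W * t" using G2b[OF t0 tT] unfolding eqn abs_minus_cancel .
    have "\<bar>2 * t * b\<bar> = t * (2 * \<bar>b\<bar>)" using t0 by (simp add: abs_mult)
    then have "t * (2 * \<bar>b\<bar>) \<le> t * (W * t)" using e1 by (simp add: mult_ac)
    then have "2 * \<bar>b\<bar> \<le> W * t" using t0 by simp
    then have "\<bar>b\<bar> \<le> W * t / 2" by linarith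
    also have "\<dots> \<le> W * (\<bar>b\<bar> / (W + 1)) / 2" using W0 by (intro divide_right_mono mult_left_mono) (auto simp: t_def)
    also have "\<dots> < \<bar>b\<bar>"
    proof -
      have p1: "0 < \<bar>b\<bar>" using bn by simp
      have p2: "0 \<le> W * \<bar>b\<bar>" using W0 by simp
      have q1: "W / (W + 1) \<le> 1" using W0 by simp
      have "W * (\<bar>b\<bar> / (W + 1)) / 2 = (W / (W + 1)) * \<bar>b\<bar> / 2" by simp
      also have "\<dots> \<le> 1 * \<bar>b\<bar> / 2" using q1 p1 by (intro divide_right_mono mult_right_mono) auto
      also have "\<dots> < \<bar>b\<bar>" using p1 by simp
      finally show ?thesis .
    qed
    finally show False by simp
  qed
  have GT: "(LINT \<tau>:{0..T}|lborel. (T - \<tau>) * gg \<tau>) = 0" using mom[OF Tpos order_refl] b0 unfolding b_def by simp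
  have hc: "continuous_on {0..T} (\<lambda>\<tau>. (T - \<tau>) * gg \<tau>)"
    by (intro continuous_intros gg_cont[OF W0 W])
  have z: "(T - \<tau>) * gg \<tau> = 0" if "\<tau> \<in> {0..T}" for \<tau>
    by (rule cont_int_zero[OF hc _ GT Tpos that]) (use gg_nonneg in auto)
  have zlt: "gg \<tau> = 0" if "\<tau> \<in> {0..<T}" for \<tau>
    using z[of \<tau>] that by auto
  assume tI: "t \<in> {0..T}"
  show "gg t = 0"
    by (rule continuous_constant_on_closure[of "{0..<T}" gg 0 t]) (use gg_cont[OF W0 W] zlt tI Tpos in auto)
qed

lemma final: "\<forall>t\<in>{0..T}. AE x in lborel. u t x = 0"
proof
  fix t assume tI: "t \<in> {0..T}"
  have "(\<integral>x. (u t x)\<^sup>2 \<partial>lborel) = 0" using gg_zero[OF tI] by (simp add: gg_def)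
  then have "AE x in lborel. (u t x)\<^sup>2 = 0"
    using integral_nonneg_eq_0_iff_AE[OF L2w3_s0[OF inL[OF tI]]] by simp
  then show "AE x in lborel. u t x = 0" by eventually_elim simp
qed

end

theorem theorem1p7:
  fixes \<beta> \<eta> T :: real and u :: "real \<Rightarrow> real \<Rightarrow> real"
  assumes "\<beta> > 0" and "\<eta> > 0" and "T > 0"
    and "mild_solution \<beta> \<eta> T u"
  shows "\<forall>t\<in>{0..T}. AE x in lborel. u t x = 0"
proof -
  interpret msol \<beta> \<eta> T u using assms by unfold_locales
  show ?thesis by (rule final)
qed



end
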